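(* Let $\alpha>0$ and let $\mu$ be a positive Borel measure on $(0,\infty)$ such that $\mu((0,1))=0$ and $\sup_{n\in\mathbb{N}}\int_{1}^{\infty}t^{-(n+1)}\,d\mu(t)<\infty$. Then the Hausdorff operator $\mathcal{H}_{\mu}$ is compact on $F^{2}_{\alpha}$ if and only if $$\lim_{n\to\infty}\int_{1}^{\infty}\frac{1}{t^{n+1}}\,d\mu(t)=0.$$
   Context: $\mathbb{N}=\{0,1,2,\dots\}$. The Fock space $F^2_\alpha$ is the Hilbert space of entire functions $f$ with $\|f\|^2=\frac{\alpha}{\pi}\int_{\mathbb{C}}|f(z)|^2e^{-\alpha|z|^2}\,dA(z)<\infty$, where $dA$ is Lebesgue area measure. For a positive Borel measure $\mu$ on $(0,\infty)$, the Hausdorff operator is $\mathcal{H}_{\mu}(f)(z)=\int_{0}^{\infty}\frac{1}{t}f\left(\frac{z}{t}\right)d\mu(t)$, $z\in\mathbb{C}$. *)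

theory Defs
  imports "HOL-Complex_Analysis.Complex_Analysis"
begin

definition fock_space :: "real \<Rightarrow> (complex \<Rightarrow> complex) set" where
  "fock_space \<alpha> = {f. f holomorphic_on UNIV \<and>
      integrable lborel (\<lambda>z. (cmod (f z))\<^sup>2 * exp (- \<alpha> * (cmod z)\<^sup>2))}"

definition fock_norm :: "real \<Rightarrow> (complex \<Rightarrow> complex) \<Rightarrow> real" where
  "fock_norm \<alpha> f = sqrt (\<alpha> / pi * integral\<^sup>L lborel (\<lambda>z. (cmod (f z))\<^sup>2 * exp (- \<alpha> * (cmod z)\<^sup>2)))"

definition hausdorff_op :: "real measure \<Rightarrow> (complex \<Rightarrow> complex) \<Rightarrow> complex \<Rightarrow> complex" where
  "hausdorff_op \<mu> f z = (LINT t:{0<..}|\<mu>. f (z / complex_of_real t) / complex_of_real t)"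

definition compact_on_fock :: "real \<Rightarrow> ((complex \<Rightarrow> complex) \<Rightarrow> (complex \<Rightarrow> complex)) \<Rightarrow> bool" where
  "compact_on_fock \<alpha> T \<longleftrightarrow>
     (\<forall>f\<in>fock_space \<alpha>. T f \<in> fock_space \<alpha>) \<and>
     (\<forall>fs :: nat \<Rightarrow> complex \<Rightarrow> complex. (\<forall>n. fs n \<in> fock_space \<alpha>) \<and> bounded (range (\<lambda>n. fock_norm \<alpha> (fs n))) \<longrightarrow>
        (\<exists>r g. strict_mono r \<and> g \<in> fock_space \<alpha> \<and>
               (\<lambda>k. fock_norm \<alpha> (T (fs (r k)) - g)) \<longlonglongrightarrow> 0))"

end

theory Submission
  imports Defs "HOL-Probability.Distributions" "HOL-Library.Diagonal_Subsequence"
begin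

lemma measurable_Complex_pair[measurable]:
  "(\<lambda>p::real\<times>real. Complex (fst p) (snd p)) \<in> borel_measurable (lborel \<Otimes>\<^sub>M lborel)"
proof -
  have "continuous_on UNIV (\<lambda>p::real\<times>real. Complex (fst p) (snd p))"
    by (intro continuous_intros)
  then have "(\<lambda>p::real\<times>real. Complex (fst p) (snd p)) \<in> borel_measurable borel"
    by (rule borel_measurable_continuous_onI)
  moreover have "sets (lborel \<Otimes>\<^sub>M lborel :: (real\<times>real) measure) = sets borel"
    by (metis lborel_prod sets_lborel)
  ultimately show ?thesis by (simp cong: measurable_cong_sets)
qed

lemma lborel_complex_pair:
  "distr (lborel \<Otimes>\<^sub>M lborel) borel (\<lambda>p::real\<times>real. Complex (fst p) (snd p)) = (lborel :: complex measure)"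
proof (rule lborel_eqI[symmetric])
  fix l u :: complex
  assume lu: "\<And>b. b \<in> Basis \<Longrightarrow> l \<bullet> b \<le> u \<bullet> b"
  have 1: "Re l \<le> Re u" "Im l \<le> Im u" using lu[of 1] lu[of \<i>] by (auto simp: inner_complex_def)
  have pre: "(\<lambda>p::real\<times>real. Complex (fst p) (snd p)) -` box l u \<inter> space (lborel \<Otimes>\<^sub>M lborel)
      = box (Re l) (Re u) \<times> box (Im l) (Im u)"
    by (auto simp: box_def Basis_complex_def inner_complex_def space_pair_measure)
  show "emeasure (distr (lborel \<Otimes>\<^sub>M lborel) borel (\<lambda>p::real\<times>real. Complex (fst p) (snd p))) (box l u)
      = (\<Prod>b\<in>Basis. (u - l) \<bullet> b)"
    using 1 by (simp add: emeasure_distr pre lborel.emeasure_pair_measure_Times Basis_complex_def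
        inner_complex_def ennreal_mult)
qed simp

lemma nn_integral_complex_pair:
  assumes [measurable]: "g \<in> borel_measurable borel"
  shows "(\<integral>\<^sup>+z. g z \<partial>(lborel::complex measure)) = (\<integral>\<^sup>+y. \<integral>\<^sup>+x. g (Complex x y) \<partial>lborel \<partial>lborel)"
proof -
  have "(\<integral>\<^sup>+z. g z \<partial>(lborel::complex measure)) = (\<integral>\<^sup>+p. g (Complex (fst p) (snd p)) \<partial>(lborel \<Otimes>\<^sub>M lborel))"
    by (subst lborel_complex_pair[symmetric]) (simp add: nn_integral_distr)
  also have "\<dots> = (\<integral>\<^sup>+y. \<integral>\<^sup>+x. g (Complex x y) \<partial>lborel \<partial>lborel)"
    by (subst lborel_pair.nn_integral_snd[symmetric]) auto
  finally show ?thesis .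
qed

lemma nn_integral_complex_pair':
  assumes [measurable]: "g \<in> borel_measurable borel"
  shows "(\<integral>\<^sup>+z. g z \<partial>(lborel::complex measure)) = (\<integral>\<^sup>+x. \<integral>\<^sup>+y. g (Complex x y) \<partial>lborel \<partial>lborel)"
proof -
  have "(\<integral>\<^sup>+z. g z \<partial>(lborel::complex measure)) = (\<integral>\<^sup>+p. g (Complex (fst p) (snd p)) \<partial>(lborel \<Otimes>\<^sub>M lborel))"
    by (subst lborel_complex_pair[symmetric]) (simp add: nn_integral_distr)
  also have "\<dots> = (\<integral>\<^sup>+x. \<integral>\<^sup>+y. g (Complex x y) \<partial>lborel \<partial>lborel)"
    by (subst lborel.nn_integral_fst[symmetric]) auto
  finally show ?thesis .
qed

lemma shear_re_invariant:
  fixes a :: real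
  shows "distr lborel borel (\<lambda>z. Complex (Re z + a * Im z) (Im z)) = (lborel :: complex measure)"
proof (rule measure_eqI)
  fix A :: "complex set" assume A: "A \<in> sets (distr lborel borel (\<lambda>z. Complex (Re z + a * Im z) (Im z)))"
  then have [measurable]: "A \<in> sets borel" by simp
  have m: "(\<lambda>z. Complex (Re z + a * Im z) (Im z)) \<in> borel_measurable borel"
      by (intro borel_measurable_continuous_onI continuous_intros)
  have ind: "(\<lambda>z. indicator A ((\<lambda>z. Complex (Re z + a * Im z) (Im z)) z)) \<in> borel_measurable borel"
    using measurable_compose[OF m borel_measurable_indicator[OF \<open>A \<in> sets borel\<close>]] by simp
  have "emeasure (distr lborel borel (\<lambda>z. Complex (Re z + a * Im z) (Im z))) A
      = (\<integral>\<^sup>+z. indicator A (Complex (Re z + a * Im z) (Im z)) \<partial>lborel)"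
  proof -
    have "emeasure (distr lborel borel (\<lambda>z. Complex (Re z + a * Im z) (Im z))) A = emeasure lborel ((\<lambda>z. Complex (Re z + a * Im z) (Im z)) -` A)"
      using m by (simp add: emeasure_distr)
    also have "\<dots> = (\<integral>\<^sup>+z. indicator ((\<lambda>z. Complex (Re z + a * Im z) (Im z)) -` A) z \<partial>lborel)"
      by (subst nn_integral_indicator) (auto intro: measurable_sets_borel[OF m])
    finally show ?thesis by (simp add: indicator_def)
  qed
  also have "\<dots> = (\<integral>\<^sup>+y. \<integral>\<^sup>+x. indicator A (Complex (x + a * y) y) \<partial>lborel \<partial>lborel)"
    by (subst nn_integral_complex_pair[OF ind]) simp
  also have "\<dots> = (\<integral>\<^sup>+y. \<integral>\<^sup>+x. indicator A (Complex x y) \<partial>lborel \<partial>lborel)"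
  proof (rule nn_integral_cong)
    fix y :: real
    show "(\<integral>\<^sup>+x. indicator A (Complex (x + a * y) y) \<partial>lborel) = (\<integral>\<^sup>+x. indicator A (Complex x y) \<partial>lborel)"
    proof -
      have "(\<lambda>x. Complex x y) \<in> borel_measurable borel"
        by (intro borel_measurable_continuous_onI continuous_intros)
      then have "(\<lambda>x. indicator A (Complex x y)) \<in> borel_measurable borel"
        using measurable_compose[OF _ borel_measurable_indicator[OF \<open>A \<in> sets borel\<close>]] by blast
      from nn_integral_real_affine[OF this, of 1 "a*y"] show ?thesis
        by (simp add: add.commute)
    qed
  qed
  also have "\<dots> = (\<integral>\<^sup>+z. indicator A z \<partial>lborel)"
    by (subst nn_integral_complex_pair[OF borel_measurable_indicator[OF \<open>A \<in> sets borel\<close>]]) simp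
  finally show "emeasure (distr lborel borel (\<lambda>z. Complex (Re z + a * Im z) (Im z))) A = emeasure lborel A"
    by simp
qed simp

lemma shear_im_invariant:
  fixes a :: real
  shows "distr lborel borel (\<lambda>z. Complex (Re z) (Im z + a * Re z)) = (lborel :: complex measure)"
proof (rule measure_eqI)
  fix A :: "complex set" assume A: "A \<in> sets (distr lborel borel (\<lambda>z. Complex (Re z) (Im z + a * Re z)))"
  then have [measurable]: "A \<in> sets borel" by simp
  have m: "(\<lambda>z. Complex (Re z) (Im z + a * Re z)) \<in> borel_measurable borel"
      by (intro borel_measurable_continuous_onI continuous_intros)
  have ind: "(\<lambda>z. indicator A ((\<lambda>z. Complex (Re z) (Im z + a * Re z)) z)) \<in> borel_measurable borel"
    using measurable_compose[OF m borel_measurable_indicator[OF \<open>A \<in> sets borel\<close>]] by simp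
  have "emeasure (distr lborel borel (\<lambda>z. Complex (Re z) (Im z + a * Re z))) A
      = (\<integral>\<^sup>+z. indicator A (Complex (Re z) (Im z + a * Re z)) \<partial>lborel)"
  proof -
    have "emeasure (distr lborel borel (\<lambda>z. Complex (Re z) (Im z + a * Re z))) A = emeasure lborel ((\<lambda>z. Complex (Re z) (Im z + a * Re z)) -` A)"
      using m by (simp add: emeasure_distr)
    also have "\<dots> = (\<integral>\<^sup>+z. indicator ((\<lambda>z. Complex (Re z) (Im z + a * Re z)) -` A) z \<partial>lborel)"
      by (subst nn_integral_indicator) (auto intro: measurable_sets_borel[OF m])
    finally show ?thesis by (simp add: indicator_def)
  qed
  also have "\<dots> = (\<integral>\<^sup>+x. \<integral>\<^sup>+y. indicator A (Complex x (y + a * x)) \<partial>lborel \<partial>lborel)"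
    by (subst nn_integral_complex_pair'[OF ind]) simp
  also have "\<dots> = (\<integral>\<^sup>+x. \<integral>\<^sup>+y. indicator A (Complex x y) \<partial>lborel \<partial>lborel)"
  proof (rule nn_integral_cong)
    fix x :: real
    show "(\<integral>\<^sup>+y. indicator A (Complex x (y + a * x)) \<partial>lborel) = (\<integral>\<^sup>+y. indicator A (Complex x y) \<partial>lborel)"
    proof -
      have "(\<lambda>y. Complex x y) \<in> borel_measurable borel"
        by (intro borel_measurable_continuous_onI continuous_intros)
      then have "(\<lambda>y. indicator A (Complex x y)) \<in> borel_measurable borel"
        using measurable_compose[OF _ borel_measurable_indicator[OF \<open>A \<in> sets borel\<close>]] by blast
      from nn_integral_real_affine[OF this, of 1 "a*x"] show ?thesis
        by (simp add: add.commute)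
    qed
  qed
  also have "\<dots> = (\<integral>\<^sup>+z. indicator A z \<partial>lborel)"
    by (subst nn_integral_complex_pair'[OF borel_measurable_indicator[OF \<open>A \<in> sets borel\<close>]]) simp
  finally show "emeasure (distr lborel borel (\<lambda>z. Complex (Re z) (Im z + a * Re z))) A = emeasure lborel A"
    by simp
qed simp

lemma distr_lborel_compose:
  fixes f g :: "complex \<Rightarrow> complex"
  assumes [measurable]: "f \<in> borel_measurable borel" "g \<in> borel_measurable borel"
  assumes "distr lborel borel f = lborel" "distr lborel borel g = lborel"
  shows "distr lborel borel (\<lambda>z. f (g z)) = lborel"
proof -
  have "distr lborel borel (\<lambda>z. f (g z)) = distr (distr lborel borel g) borel f"
    by (subst distr_distr) (auto simp: o_def)
  also have "\<dots> = lborel" using assms by simp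
  finally show ?thesis .
qed

lemma rotation_invariant:
  fixes \<theta> :: real
  assumes "0 < \<theta>" "\<theta> < pi"
  shows "distr lborel borel (\<lambda>z. cis \<theta> * z) = (lborel :: complex measure)"
proof -
  define c s where "c = cos \<theta>" and "s = sin \<theta>"
  have s: "s > 0" using assms by (simp add: s_def sin_gt_zero)
  have cs: "c^2 + s^2 = 1" by (simp add: c_def s_def)
  define t where "t = - (1 - c) / s"
  define S where "S = (\<lambda>z. Complex (Re z + t * Im z) (Im z))"
  define T where "T = (\<lambda>z. Complex (Re z) (Im z + s * Re z))"
  have mS: "S \<in> borel_measurable borel" and mT: "T \<in> borel_measurable borel"
    unfolding S_def T_def by (intro borel_measurable_continuous_onI continuous_intros)+
  have dS: "distr lborel borel S = lborel" unfolding S_def by (rule shear_re_invariant)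
  have dT: "distr lborel borel T = lborel" unfolding T_def by (rule shear_im_invariant)
  have eq: "S (T (S z)) = cis \<theta> * z" for z
  proof -
    have e1: "1 + t * s = c" using s by (simp add: t_def field_simps)
    have e2: "t * c + t = - s" proof -
      have "t * c + t = - (1 - c) * (1 + c) / s" using s by (simp add: t_def field_simps)
      also have "\<dots> = - (s^2) / s"
      proof -
        have "(1 - c) * (1 + c) = s^2" using cs by (simp add: algebra_simps power2_eq_square)
        then have "- (1 - c) * (1 + c) = - (s^2)" by (metis mult_minus_left)
        then show ?thesis by (metis divide_minus_left)
      qed
      also have "\<dots> = - s" using s by (simp add: power2_eq_square)
      finally show ?thesis .
    qed
    have "Re (S (T (S z))) = (1 + t * s) * Re z + (t * (1 + t * s) + t) * Im z"
      unfolding S_def T_def complex.sel by algebra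
    also have "\<dots> = c * Re z - s * Im z"
      by (simp only: e1 e2)
    finally have r: "Re (S (T (S z))) = c * Re z - s * Im z" .
    have "Im (S (T (S z))) = s * Re z + (1 + t * s) * Im z"
      unfolding S_def T_def complex.sel by algebra
    also have "\<dots> = s * Re z + c * Im z" using e1 by simp
    finally have i: "Im (S (T (S z))) = s * Re z + c * Im z" .
    show ?thesis using r i by (simp add: complex_eq_iff c_def s_def)
  qed
  have "distr lborel borel (\<lambda>z. S (T (S z))) = lborel"
    using distr_lborel_compose[OF mS measurable_compose[OF mS mT] dS distr_lborel_compose[OF mT mS dT dS]] .
  then show ?thesis by (simp add: eq)
qed

definition gw :: "real \<Rightarrow> complex \<Rightarrow> real" where
  "gw \<alpha> z = exp (- \<alpha> * (cmod z)\<^sup>2)"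

lemma gw_pos: "gw \<alpha> z > 0" by (simp add: gw_def)

lemma continuous_gw[continuous_intros]: "continuous_on S (gw \<alpha>)"
  unfolding gw_def by (intro continuous_intros)

lemma borel_measurable_gw[measurable]: "gw \<alpha> \<in> borel_measurable borel"
  by (intro borel_measurable_continuous_onI continuous_intros)

lemma gw_rot: "cmod \<zeta> = 1 \<Longrightarrow> gw \<alpha> (\<zeta> * z) = gw \<alpha> z"
  by (simp add: gw_def norm_mult)

definition mon :: "nat \<Rightarrow> nat \<Rightarrow> real \<Rightarrow> real \<Rightarrow> complex \<Rightarrow> complex" where
  "mon n m \<alpha> R z = z ^ n * cnj z ^ m * complex_of_real (gw \<alpha> z * indicator (cball 0 R) z)"

lemma borel_measurable_mon[measurable]: "mon n m \<alpha> R \<in> borel_measurable borel"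
proof -
  have c: "(\<lambda>z. z ^ n * cnj z ^ m * complex_of_real (gw \<alpha> z)) \<in> borel_measurable borel"
    by (intro borel_measurable_continuous_onI continuous_intros)
  have "(\<lambda>z. (z ^ n * cnj z ^ m * complex_of_real (gw \<alpha> z)) * complex_of_real (indicator (cball 0 R) z))
      \<in> borel_measurable borel"
    using c borel_closed[OF closed_cball, of "0::complex" R] by measurable
  then show ?thesis unfolding mon_def by (simp add: mult.assoc)
qed

lemma mon_rot:
  assumes "cmod \<zeta> = 1"
  shows "mon n m \<alpha> R (\<zeta> * z) = (\<zeta> ^ n * cnj \<zeta> ^ m) * mon n m \<alpha> R z"
proof -
  have "indicator (cball 0 R) (\<zeta> * z) = (indicator (cball 0 R) z :: real)"
    using assms by (simp add: indicator_def norm_mult)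
  then show ?thesis using assms
    by (simp add: mon_def gw_rot power_mult_distrib algebra_simps)
qed

lemma orth_disc:
  assumes "n \<noteq> m"
  shows "(\<integral>z. mon n m \<alpha> R z \<partial>lborel) = 0"
proof -
  define d where "d = real n - real m"
  have d0: "d \<noteq> 0" using assms by (simp add: d_def)
  define \<theta> where "\<theta> = pi / (\<bar>d\<bar> + 1)"
  have th: "0 < \<theta>" "\<theta> < pi" using d0 by (auto simp: \<theta>_def field_simps)
  define \<zeta> where "\<zeta> = cis \<theta>"
  have z1: "cmod \<zeta> = 1" by (simp add: \<zeta>_def)
  have "\<zeta> ^ n * cnj \<zeta> ^ m = cis (real n * \<theta>) * cis (real m * (-\<theta>))"
    unfolding \<zeta>_def cis_cnj by (simp only: Complex.DeMoivre)
  also have "\<dots> = cis (d * \<theta>)" by (simp add: cis_mult d_def algebra_simps)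
  finally have "\<zeta> ^ n * cnj \<zeta> ^ m = cis (d * \<theta>)" .
  moreover have "sin (d * \<theta>) \<noteq> 0"
  proof -
    have "0 < \<bar>d\<bar> * \<theta>" "\<bar>d\<bar> * \<theta> < pi"
      using d0 th by (auto simp: \<theta>_def field_simps)
    then have "sin (\<bar>d\<bar> * \<theta>) > 0" by (rule sin_gt_zero)
    then show ?thesis by (cases "d \<ge> 0") auto
  qed
  ultimately have ne: "\<zeta> ^ n * cnj \<zeta> ^ m \<noteq> 1"
    by (metis cis.sel(2) one_complex.sel(2))
  define I where "I = (\<integral>z. mon n m \<alpha> R z \<partial>lborel)"
  have mz: "(\<lambda>z. \<zeta> * z) \<in> borel_measurable borel"
    by (intro borel_measurable_continuous_onI continuous_intros)
  have "I = (\<integral>z. mon n m \<alpha> R z \<partial>(distr lborel borel (\<lambda>z. \<zeta> * z)))"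
    by (simp add: I_def \<zeta>_def rotation_invariant[OF th])
  also have "\<dots> = (\<integral>z. mon n m \<alpha> R (\<zeta> * z) \<partial>lborel)"
    using mz by (intro integral_distr) simp_all
  also have "\<dots> = (\<zeta> ^ n * cnj \<zeta> ^ m) * I"
    by (simp add: mon_rot[OF z1] I_def)
  finally have "(1 - \<zeta> ^ n * cnj \<zeta> ^ m) * I = 0" by (simp add: algebra_simps)
  with ne show ?thesis by (simp add: I_def)
qed

definition gam :: "real \<Rightarrow> real \<Rightarrow> nat \<Rightarrow> real" where
  "gam \<alpha> R k = (\<integral>z. (cmod z)^(2*k) * gw \<alpha> z * indicator (cball 0 R) z \<partial>lborel)"

lemma gw_le1: "\<alpha> \<ge> 0 \<Longrightarrow> gw \<alpha> z \<le> 1"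
  by (simp add: gw_def)

lemma mon_diag: "mon k k \<alpha> R z = complex_of_real ((cmod z)^(2*k) * gw \<alpha> z * indicator (cball 0 R) z)"
proof -
  have "z ^ k * cnj z ^ k = (z * cnj z) ^ k" by (simp add: power_mult_distrib)
  also have "\<dots> = (complex_of_real ((cmod z)^2)) ^ k" by (simp only: complex_norm_square)
  also have "\<dots> = complex_of_real ((cmod z)^(2*k))" by (simp add: power_mult)
  finally have "z ^ k * cnj z ^ k = complex_of_real ((cmod z)^(2*k))" .
  then show ?thesis by (simp add: mon_def mult.assoc)
qed

lemma integrable_mon:
  assumes "\<alpha> \<ge> 0"
  shows "integrable lborel (mon k l \<alpha> R)"
proof (rule integrableI_bounded_set[where A="cball 0 R" and B="R^(k+l)"])
  show "emeasure lborel (cball (0::complex) R) < \<infinity>" by (rule emeasure_lborel_cball_finite)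
  show "AE x in lborel. x \<in> cball 0 R \<longrightarrow> norm (mon k l \<alpha> R x) \<le> R ^ (k + l)"
  proof (intro AE_I2 impI)
    fix x :: complex assume x: "x \<in> cball 0 R"
    then have nx: "cmod x \<le> R" by simp
    have R0: "0 \<le> R" using nx norm_ge_zero[of x] by linarith
    have "norm (mon k l \<alpha> R x) = cmod x ^ k * cmod x ^ l * gw \<alpha> x"
      using x by (simp add: mon_def norm_mult norm_power abs_of_pos gw_pos)
    also have "\<dots> \<le> R ^ k * R ^ l * 1"
      using nx gw_le1[OF assms, of x] R0
      by (intro mult_mono power_mono) (auto simp: gw_pos less_imp_le)
    finally show "norm (mon k l \<alpha> R x) \<le> R ^ (k + l)" by (simp add: power_add)
  qed
  show "AE x in lborel. x \<notin> cball 0 R \<longrightarrow> mon k l \<alpha> R x = 0"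
    by (intro AE_I2) (simp add: mon_def)
qed simp_all

lemma poly_disc_integral:
  fixes c :: "nat \<Rightarrow> complex"
  assumes "\<alpha> \<ge> 0"
  shows "(\<integral>z. (cmod (\<Sum>k<N. c k * z^k))^2 * gw \<alpha> z * indicator (cball 0 R) z \<partial>lborel)
       = (\<Sum>k<N. (cmod (c k))^2 * gam \<alpha> R k)"
proof -
  have pt: "complex_of_real ((cmod (\<Sum>k<N. c k * z^k))^2 * gw \<alpha> z * indicator (cball 0 R) z)
      = (\<Sum>k<N. \<Sum>l<N. (c k * cnj (c l)) * mon k l \<alpha> R z)" for z
  proof -
    have "complex_of_real ((cmod (\<Sum>k<N. c k * z^k))^2) = (\<Sum>k<N. c k * z^k) * cnj (\<Sum>l<N. c l * z^l)"
      by (rule complex_norm_square)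
    also have "\<dots> = (\<Sum>k<N. \<Sum>l<N. (c k * z^k) * (cnj (c l) * cnj z ^ l))"
      by (simp add: sum_product)
    finally show ?thesis
      by (simp add: mon_def sum_distrib_left mult_ac)
  qed
  have "complex_of_real (\<integral>z. (cmod (\<Sum>k<N. c k * z^k))^2 * gw \<alpha> z * indicator (cball 0 R) z \<partial>lborel)
      = (\<integral>z. (\<Sum>k<N. \<Sum>l<N. (c k * cnj (c l)) * mon k l \<alpha> R z) \<partial>lborel)"
    by (subst integral_complex_of_real[symmetric]) (simp only: pt)
  also have "\<dots> = (\<Sum>k<N. \<Sum>l<N. (c k * cnj (c l)) * (\<integral>z. mon k l \<alpha> R z \<partial>lborel))"
    using integrable_mon[OF assms]
    by (simp add: integral_sum integrable_sum integrable_mult_right)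
  also have "\<dots> = (\<Sum>k<N. (c k * cnj (c k)) * (\<integral>z. mon k k \<alpha> R z \<partial>lborel))"
  proof (rule sum.cong[OF refl])
    fix k assume "k \<in> {..<N}"
    then have "(\<Sum>l<N. (c k * cnj (c l)) * (\<integral>z. mon k l \<alpha> R z \<partial>lborel))
        = (\<Sum>l\<in>{k}. (c k * cnj (c l)) * (\<integral>z. mon k l \<alpha> R z \<partial>lborel))"
      by (intro sum.mono_neutral_right) (auto simp: orth_disc)
    then show "(\<Sum>l<N. (c k * cnj (c l)) * (\<integral>z. mon k l \<alpha> R z \<partial>lborel))
        = (c k * cnj (c k)) * (\<integral>z. mon k k \<alpha> R z \<partial>lborel)" by simp
  qed
  also have "\<dots> = (\<Sum>k<N. complex_of_real ((cmod (c k))^2) * complex_of_real (gam \<alpha> R k))"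
    by (intro sum.cong refl) (simp only: mon_diag gam_def complex_norm_square integral_complex_of_real)
  also have "\<dots> = complex_of_real (\<Sum>k<N. (cmod (c k))^2 * gam \<alpha> R k)"
    by (simp only: of_real_sum of_real_mult)
  finally show ?thesis by (simp only: of_real_eq_iff)
qed

lemma borel_measurable_poly_disc:
  "(\<lambda>z. (cmod (\<Sum>k<N. c k * z^k))^2 * gw \<alpha> z * indicator (cball 0 R) z) \<in> borel_measurable (lborel :: complex measure)"
proof -
  have "(\<lambda>z. (cmod (\<Sum>k<N. c k * z^k))^2 * gw \<alpha> z) \<in> borel_measurable borel"
    by (intro borel_measurable_continuous_onI continuous_intros)
  then show ?thesis
    using borel_closed[OF closed_cball, of "0::complex" R] by measurable
qed

lemma disc_parseval:
  fixes c :: "nat \<Rightarrow> complex"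
  assumes \<alpha>: "\<alpha> \<ge> 0" and R: "R \<ge> 0" and sm: "summable (\<lambda>k. cmod (c k) * R^k)"
  shows "(\<lambda>k. (cmod (c k))^2 * gam \<alpha> R k) sums
           (\<integral>z. (cmod (\<Sum>k. c k * z^k))^2 * gw \<alpha> z * indicator (cball 0 R) z \<partial>lborel)"
proof -
  define B where "B = (\<Sum>k. cmod (c k) * R^k)"
  define s where "s = (\<lambda>N z. (cmod (\<Sum>k<N. c k * z^k))^2 * gw \<alpha> z * indicator (cball 0 R) z)"
  define f where "f = (\<lambda>z. (cmod (\<Sum>k. c k * z^k))^2 * gw \<alpha> z * indicator (cball 0 R) z)"
  have ms: "s N \<in> borel_measurable lborel" for N
    unfolding s_def by (rule borel_measurable_poly_disc)
  have lim: "(\<lambda>N. s N z) \<longlonglongrightarrow> f z" for z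
  proof (cases "z \<in> cball 0 R")
    case True
    then have "cmod z \<le> R" by simp
    have "summable (\<lambda>k. norm (c k * z^k))"
    proof (rule summable_comparison_test'[OF sm])
      fix k show "norm (norm (c k * z^k)) \<le> cmod (c k) * R^k"
        using \<open>cmod z \<le> R\<close> by (simp add: norm_mult norm_power mult_left_mono power_mono)
    qed
    then have "(\<lambda>N. \<Sum>k<N. c k * z^k) \<longlonglongrightarrow> (\<Sum>k. c k * z^k)"
      by (rule summable_LIMSEQ[OF summable_norm_cancel])
    then show ?thesis unfolding s_def f_def by (intro tendsto_intros)
  next
    case False
    then show ?thesis by (simp add: s_def f_def)
  qed
  have mf: "f \<in> borel_measurable lborel"
    by (rule borel_measurable_LIMSEQ_metric[OF ms lim])
  have bound: "norm (s N z) \<le> B^2 * indicator (cball 0 R) z" for N z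
  proof (cases "z \<in> cball 0 R")
    case True
    then have nz: "cmod z \<le> R" by simp
    have "cmod (\<Sum>k<N. c k * z^k) \<le> (\<Sum>k<N. cmod (c k) * R^k)"
      by (rule order_trans[OF norm_sum sum_mono])
         (use nz in \<open>simp add: norm_mult norm_power mult_left_mono power_mono\<close>)
    also have "\<dots> \<le> B" unfolding B_def
      by (rule sum_le_suminf[OF sm]) (use R in auto)
    finally have b: "cmod (\<Sum>k<N. c k * z^k) \<le> B" .
    have "(cmod (\<Sum>k<N. c k * z^k))^2 * gw \<alpha> z \<le> B^2 * 1"
      using b gw_le1[OF \<alpha>, of z] gw_pos[of \<alpha> z]
      by (intro mult_mono power_mono) auto
    moreover have "0 \<le> (cmod (\<Sum>k<N. c k * z^k))^2 * gw \<alpha> z"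
      using gw_pos[of \<alpha> z] by simp
    ultimately show ?thesis using True by (simp add: s_def)
  next
    case False
    then show ?thesis by (simp add: s_def)
  qed
  have iw: "integrable lborel (\<lambda>z. B^2 * indicator (cball (0::complex) R) z)"
    using emeasure_lborel_cball_finite[of "0::complex" R]
    by (intro integrable_mult_right) (simp add: integrable_indicator_iff)
  have "(\<lambda>N. integral\<^sup>L lborel (s N)) \<longlonglongrightarrow> integral\<^sup>L lborel f"
    by (rule integral_dominated_convergence[OF mf ms iw]) (use lim bound in auto)
  moreover have "integral\<^sup>L lborel (s N) = (\<Sum>k<N. (cmod (c k))^2 * gam \<alpha> R k)" for N
    unfolding s_def by (rule poly_disc_integral[OF \<alpha>])
  ultimately show ?thesis unfolding sums_def f_def by simp
qed

lemma nn_integral_cball_SUP: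
  fixes F :: "complex \<Rightarrow> real"
  assumes mF: "F \<in> borel_measurable lborel" and F0: "\<And>z. F z \<ge> 0"
  shows "(SUP n. \<integral>\<^sup>+z. ennreal (F z * indicator (cball 0 (real n)) z) \<partial>lborel) = (\<integral>\<^sup>+z. ennreal (F z) \<partial>lborel)"
proof -
  define G where "G = (\<lambda>n z. ennreal (F z * indicator (cball 0 (real n)) z))"
  have mG: "G n \<in> borel_measurable lborel" for n
    unfolding G_def using mF borel_closed[OF closed_cball, of "0::complex" "real n"] by measurable
  have inc: "incseq G"
  proof (intro incseq_SucI le_funI)
    fix n z
    show "G n z \<le> G (Suc n) z"
      using F0[of z] by (auto simp: G_def indicator_def intro!: ennreal_leI)
  qed
  have sup: "(SUP n. G n z) = ennreal (F z)" for z
  proof (rule antisym)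
    show "(SUP n. G n z) \<le> ennreal (F z)"
      using F0[of z] by (intro SUP_least) (auto simp: G_def indicator_def intro!: ennreal_leI)
    obtain n :: nat where "cmod z \<le> real n" using real_arch_simple by blast
    then have "G n z = ennreal (F z)" by (simp add: G_def)
    then show "ennreal (F z) \<le> (SUP n. G n z)" by (metis SUP_upper UNIV_I)
  qed
  have "(\<integral>\<^sup>+z. ennreal (F z) \<partial>lborel) = (\<integral>\<^sup>+z. (SUP n. G n z) \<partial>lborel)"
    by (simp add: sup)
  also have "\<dots> = (SUP n. integral\<^sup>N lborel (G n))"
    by (rule nn_integral_monotone_convergence_SUP[OF inc mG])
  finally show ?thesis by (simp add: G_def)
qed

definition Gam :: "real \<Rightarrow> nat \<Rightarrow> ennreal" where
  "Gam \<alpha> k = (\<integral>\<^sup>+z. ennreal ((cmod z)^(2*k) * gw \<alpha> z) \<partial>lborel)"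

lemma gam_nonneg: "gam \<alpha> R k \<ge> 0"
  unfolding gam_def by (intro integral_nonneg_AE AE_I2) (simp add: gw_pos less_imp_le)

lemma ennreal_gam:
  assumes "\<alpha> \<ge> 0" "R \<ge> 0"
  shows "ennreal (gam \<alpha> R k) = (\<integral>\<^sup>+z. ennreal ((cmod z)^(2*k) * gw \<alpha> z * indicator (cball 0 R) z) \<partial>lborel)"
proof -
  have m: "(\<lambda>z. (cmod z)^(2*k) * gw \<alpha> z * indicator (cball 0 R) z) \<in> borel_measurable (lborel :: complex measure)"
  proof -
    have "(\<lambda>z::complex. (cmod z)^(2*k) * gw \<alpha> z) \<in> borel_measurable borel"
      by (intro borel_measurable_continuous_onI continuous_intros)
    then show ?thesis using borel_closed[OF closed_cball, of "0::complex" R] by measurable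
  qed
  have i: "integrable lborel (\<lambda>z. (cmod z)^(2*k) * gw \<alpha> z * indicator (cball 0 R) z)"
  proof (rule integrableI_bounded_set[where A="cball 0 R" and B="R^(2*k)"])
    show "emeasure lborel (cball (0::complex) R) < \<infinity>" by (rule emeasure_lborel_cball_finite)
    show "AE x in lborel. x \<in> cball 0 R \<longrightarrow> norm ((cmod x)^(2*k) * gw \<alpha> x * indicator (cball 0 R) x) \<le> R^(2*k)"
    proof (intro AE_I2 impI)
      fix x :: complex assume x: "x \<in> cball 0 R"
      then have "cmod x \<le> R" by simp
      then have "(cmod x)^(2*k) * gw \<alpha> x \<le> R^(2*k) * 1"
        using gw_le1[OF assms(1), of x] gw_pos[of \<alpha> x] by (intro mult_mono power_mono) auto
      then show "norm ((cmod x)^(2*k) * gw \<alpha> x * indicator (cball 0 R) x) \<le> R^(2*k)"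
        using x gw_pos[of \<alpha> x] by (simp add: abs_mult)
    qed
    show "AE x in lborel. x \<notin> cball 0 R \<longrightarrow> (cmod x)^(2*k) * gw \<alpha> x * indicator (cball 0 R) x = 0"
      by (intro AE_I2) simp
  qed (use m in simp_all)
  show ?thesis unfolding gam_def
    by (rule nn_integral_eq_integral[OF i, symmetric]) (simp add: gw_pos less_imp_le)
qed

lemma parseval:
  fixes c :: "nat \<Rightarrow> complex"
  assumes \<alpha>: "\<alpha> \<ge> 0" and sm: "\<And>R. R \<ge> 0 \<Longrightarrow> summable (\<lambda>k. cmod (c k) * R^k)"
  shows "(\<integral>\<^sup>+z. ennreal ((cmod (\<Sum>k. c k * z^k))^2 * gw \<alpha> z) \<partial>lborel)
        = (\<Sum>k. ennreal ((cmod (c k))^2) * Gam \<alpha> k)"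
proof -
  define F where "F = (\<lambda>z. (cmod (\<Sum>k. c k * z^k))^2 * gw \<alpha> z)"
  have mF: "F \<in> borel_measurable lborel"
  proof -
    have "(\<lambda>z. (\<Sum>k<N. c k * z^k)) \<in> borel_measurable borel" for N
      by (intro borel_measurable_continuous_onI continuous_intros)
    moreover have "(\<lambda>N. (\<Sum>k<N. c k * z^k)) \<longlonglongrightarrow> (\<Sum>k. c k * z^k)" for z
    proof -
      have "summable (\<lambda>k. norm (c k * z^k))"
        using sm[of "cmod z"] by (simp add: norm_mult norm_power)
      then show ?thesis by (rule summable_LIMSEQ[OF summable_norm_cancel])
    qed
    ultimately have "(\<lambda>z. (\<Sum>k. c k * z^k)) \<in> borel_measurable borel"
      by (rule borel_measurable_LIMSEQ_metric)
    then have [measurable]: "(\<lambda>z. (\<Sum>k. c k * z^k)) \<in> borel_measurable lborel" by simp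
    then show ?thesis unfolding F_def by measurable
  qed
  have F0: "F z \<ge> 0" for z by (simp add: F_def gw_pos less_imp_le)
  have disc: "(\<integral>\<^sup>+z. ennreal (F z * indicator (cball 0 (real n)) z) \<partial>lborel)
      = (\<Sum>k. ennreal ((cmod (c k))^2 * gam \<alpha> (real n) k))" for n
  proof -
    have s: "(\<lambda>k. (cmod (c k))^2 * gam \<alpha> (real n) k) sums
           (\<integral>z. F z * indicator (cball 0 (real n)) z \<partial>lborel)"
      unfolding F_def by (rule disc_parseval[OF \<alpha> _ sm]) simp_all
    have i: "integrable lborel (\<lambda>z. F z * indicator (cball 0 (real n)) z)"
    proof -
      obtain B where B: "\<And>z. z \<in> cball 0 (real n) \<Longrightarrow> cmod (\<Sum>k. c k * z^k) \<le> B"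
      proof
        fix z :: complex assume "z \<in> cball 0 (real n)"
        then have nz: "cmod z \<le> real n" by simp
        have sz: "summable (\<lambda>k. norm (c k * z^k))"
          using sm[of "cmod z"] by (simp add: norm_mult norm_power)
        have "cmod (\<Sum>k. c k * z^k) \<le> (\<Sum>k. norm (c k * z^k))" by (rule summable_norm[OF sz])
        also have "\<dots> \<le> (\<Sum>k. cmod (c k) * (real n)^k)"
          using sz sm[of "real n"] nz
          by (intro suminf_le) (auto simp: norm_mult norm_power mult_left_mono power_mono)
        finally show "cmod (\<Sum>k. c k * z^k) \<le> (\<Sum>k. cmod (c k) * (real n)^k)" .
      qed
      show ?thesis
      proof (rule integrableI_bounded_set[where A="cball 0 (real n)" and B="B^2"])
        show "emeasure lborel (cball (0::complex) (real n)) < \<infinity>" by (rule emeasure_lborel_cball_finite)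
        show "AE x in lborel. x \<in> cball 0 (real n) \<longrightarrow> norm (F x * indicator (cball 0 (real n)) x) \<le> B^2"
        proof (intro AE_I2 impI)
          fix x :: complex assume x: "x \<in> cball 0 (real n)"
          have "(cmod (\<Sum>k. c k * x^k))^2 * gw \<alpha> x \<le> B^2 * 1"
            using B[OF x] gw_le1[OF \<alpha>, of x] gw_pos[of \<alpha> x]
            by (intro mult_mono power_mono) auto
          then show "norm (F x * indicator (cball 0 (real n)) x) \<le> B^2"
            using x F0[of x] by (simp add: F_def)
        qed
        show "AE x in lborel. x \<notin> cball 0 (real n) \<longrightarrow> F x * indicator (cball 0 (real n)) x = 0"
          by (intro AE_I2) simp
        show "(\<lambda>x. F x * indicator (cball 0 (real n)) x) \<in> borel_measurable lborel"
          using mF borel_closed[OF closed_cball, of "0::complex" "real n"] by measurable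
      qed simp
    qed
    have "(\<integral>\<^sup>+z. ennreal (F z * indicator (cball 0 (real n)) z) \<partial>lborel)
        = ennreal (\<integral>z. F z * indicator (cball 0 (real n)) z \<partial>lborel)"
      by (rule nn_integral_eq_integral[OF i]) (simp add: F0)
    also have "\<dots> = (\<Sum>k. ennreal ((cmod (c k))^2 * gam \<alpha> (real n) k))"
      by (rule suminf_ennreal_eq[symmetric, OF _ s]) (simp add: gam_nonneg)
    finally show ?thesis .
  qed
  have "(\<integral>\<^sup>+z. ennreal (F z) \<partial>lborel) = (SUP n. \<Sum>k. ennreal ((cmod (c k))^2 * gam \<alpha> (real n) k))"
    by (simp add: nn_integral_cball_SUP[OF mF F0, symmetric] disc)
  also have "\<dots> = (\<Sum>k. SUP n. ennreal ((cmod (c k))^2 * gam \<alpha> (real n) k))"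
  proof (rule ennreal_suminf_SUP_eq[symmetric])
    fix k
    show "incseq (\<lambda>n. ennreal ((cmod (c k))^2 * gam \<alpha> (real n) k))"
    proof (intro incseq_SucI)
      fix n
      have "ennreal (gam \<alpha> (real n) k) \<le> ennreal (gam \<alpha> (real (Suc n)) k)"
        unfolding ennreal_gam[OF \<alpha> of_nat_0_le_iff] ennreal_gam[OF \<alpha> of_nat_0_le_iff]
        by (intro nn_integral_mono ennreal_leI mult_left_mono) (auto simp: indicator_def gw_pos less_imp_le)
      then show "ennreal ((cmod (c k))^2 * gam \<alpha> (real n) k) \<le> ennreal ((cmod (c k))^2 * gam \<alpha> (real (Suc n)) k)"
        by (simp add: ennreal_mult'' mult_left_mono gam_nonneg)
    qed
  qed
  also have "\<dots> = (\<Sum>k. ennreal ((cmod (c k))^2) * Gam \<alpha> k)"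
  proof (intro suminf_cong)
    fix k
    have "(\<lambda>z::complex. (cmod z)^(2*k) * gw \<alpha> z) \<in> borel_measurable borel"
      by (intro borel_measurable_continuous_onI continuous_intros)
    then have mk: "(\<lambda>z::complex. (cmod z)^(2*k) * gw \<alpha> z) \<in> borel_measurable lborel" by simp
    have "(SUP n. ennreal ((cmod (c k))^2 * gam \<alpha> (real n) k))
        = (SUP n. ennreal ((cmod (c k))^2) * ennreal (gam \<alpha> (real n) k))"
      by (intro SUP_cong refl) (simp add: ennreal_mult gam_nonneg)
    also have "\<dots> = ennreal ((cmod (c k))^2) * (SUP n. ennreal (gam \<alpha> (real n) k))"
      by (simp add: SUP_mult_left_ennreal)
    also have "(SUP n. ennreal (gam \<alpha> (real n) k)) = Gam \<alpha> k"
      unfolding Gam_def ennreal_gam[OF \<alpha> of_nat_0_le_iff]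
      by (rule nn_integral_cball_SUP[OF mk]) (simp add: gw_pos less_imp_le)
    finally show "(SUP n. ennreal ((cmod (c k))^2 * gam \<alpha> (real n) k)) = ennreal ((cmod (c k))^2) * Gam \<alpha> k" .
  qed
  finally show ?thesis by (simp add: F_def)
qed

lemma gauss_nn_finite:
  fixes \<beta> :: real assumes b: "\<beta> > 0"
  shows "(\<integral>\<^sup>+x. ennreal (exp (- \<beta> * x\<^sup>2)) \<partial>lborel) < \<infinity>"
proof -
  have "has_bochner_integral lborel (\<lambda>x::real. exp (- x\<^sup>2) * x ^ (2 * 0))
      (sqrt pi * (fact (2 * 0) / (2 ^ (2 * 0) * fact 0)))"
    using has_bochner_integral_even_function[OF gaussian_moment_even_pos[where k=0]] by simp
  then have i: "integrable lborel (\<lambda>x::real. exp (- x\<^sup>2))"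
    by (simp add: has_bochner_integral_iff)
  have fin: "(\<integral>\<^sup>+x. ennreal (exp (- x\<^sup>2)) \<partial>lborel) < \<infinity>"
    using i by (simp add: integrable_iff_bounded)
  define c where "c = 1 / sqrt \<beta>"
  have c: "c \<noteq> 0" "c > 0" using b by (auto simp: c_def)
  have "(\<integral>\<^sup>+x. ennreal (exp (- \<beta> * x\<^sup>2)) \<partial>lborel)
      = ennreal \<bar>c\<bar> * (\<integral>\<^sup>+x. ennreal (exp (- \<beta> * (0 + c * x)\<^sup>2)) \<partial>lborel)"
    by (rule nn_integral_real_affine[OF _ c(1)]) simp
  also have "(\<lambda>x. ennreal (exp (- \<beta> * (0 + c * x)\<^sup>2))) = (\<lambda>x. ennreal (exp (- x\<^sup>2)))"
  proof
    fix x :: real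
    have "\<beta> * (0 + c * x)\<^sup>2 = x\<^sup>2"
      using b by (simp add: c_def power_mult_distrib power_divide real_sqrt_pow2)
    then show "ennreal (exp (- \<beta> * (0 + c * x)\<^sup>2)) = ennreal (exp (- x\<^sup>2))" by simp
  qed
  finally show ?thesis using fin by (simp add: ennreal_mult_less_top)
qed

lemma pow_le_fact_exp:
  fixes u :: real assumes "u \<ge> 0"
  shows "u ^ k \<le> fact k * exp u"
proof -
  have s: "summable (\<lambda>n. u^n / fact n)"
    using exp_converges[of u] by (simp add: sums_summable divide_inverse mult.commute scaleR_conv_of_real)
  have "u ^ k / fact k \<le> (\<Sum>n<Suc k. u^n / fact n)"
    using assms by (intro member_le_sum) auto
  also have "\<dots> \<le> (\<Sum>n. u^n / fact n)"
    using s assms by (intro sum_le_suminf) auto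
  also have "\<dots> = exp u"
    using exp_converges[of u] by (simp add: sums_iff divide_inverse mult.commute scaleR_conv_of_real)
  finally show ?thesis by (simp add: field_simps)
qed

lemma gauss2_finite:
  fixes \<beta> :: real assumes b: "\<beta> > 0"
  shows "(\<integral>\<^sup>+z. ennreal (exp (- \<beta> * (cmod z)\<^sup>2)) \<partial>(lborel :: complex measure)) < \<infinity>"
proof -
  have "(\<lambda>z::complex. exp (- \<beta> * (cmod z)\<^sup>2)) \<in> borel_measurable borel"
    by (intro borel_measurable_continuous_onI continuous_intros)
  then have m: "(\<lambda>z::complex. ennreal (exp (- \<beta> * (cmod z)\<^sup>2))) \<in> borel_measurable borel"
    by (rule measurable_compose[OF _ measurable_ennreal])
  have "(\<integral>\<^sup>+z. ennreal (exp (- \<beta> * (cmod z)\<^sup>2)) \<partial>(lborel :: complex measure))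
      = (\<integral>\<^sup>+y. \<integral>\<^sup>+x. ennreal (exp (- \<beta> * (cmod (Complex x y))\<^sup>2)) \<partial>lborel \<partial>lborel)"
    by (rule nn_integral_complex_pair[OF m])
  also have "\<dots> = (\<integral>\<^sup>+y. \<integral>\<^sup>+x. ennreal (exp (- \<beta> * y\<^sup>2)) * ennreal (exp (- \<beta> * x\<^sup>2)) \<partial>lborel \<partial>lborel)"
    by (intro nn_integral_cong) (simp add: cmod_def exp_add[symmetric] ennreal_mult[symmetric] algebra_simps)
  also have "\<dots> = (\<integral>\<^sup>+y. ennreal (exp (- \<beta> * y\<^sup>2)) * (\<integral>\<^sup>+x. ennreal (exp (- \<beta> * x\<^sup>2)) \<partial>lborel) \<partial>lborel)"
    by (intro nn_integral_cong nn_integral_cmult) simp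
  also have "\<dots> = (\<integral>\<^sup>+y. ennreal (exp (- \<beta> * y\<^sup>2)) \<partial>lborel) * (\<integral>\<^sup>+x. ennreal (exp (- \<beta> * x\<^sup>2)) \<partial>lborel)"
    by (rule nn_integral_multc) simp
  finally show ?thesis using gauss_nn_finite[OF b] by (simp add: ennreal_mult_less_top)
qed

lemma Gam_finite:
  assumes a: "\<alpha> > 0"
  shows "Gam \<alpha> k < \<infinity>"
proof -
  define C where "C = fact k * (2 / \<alpha>) ^ k"
  have pt: "(cmod z)^(2*k) * gw \<alpha> z \<le> C * exp (- (\<alpha>/2) * (cmod z)\<^sup>2)" for z :: complex
  proof -
    define u where "u = \<alpha> / 2 * (cmod z)\<^sup>2"
    have u0: "u \<ge> 0" using a by (simp add: u_def)
    have e1: "(2/\<alpha>) * u = (cmod z)\<^sup>2" using a by (simp add: u_def)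
    have "(cmod z)^(2*k) = ((cmod z)\<^sup>2)^k" by (simp add: power_mult)
    also have "\<dots> = ((2/\<alpha>) * u)^k" by (simp only: e1)
    also have "\<dots> = (2/\<alpha>)^k * u^k" by (rule power_mult_distrib)
    also have "\<dots> \<le> (2/\<alpha>)^k * (fact k * exp u)"
      using a u0 by (intro mult_left_mono pow_le_fact_exp) auto
    finally have h: "(cmod z)^(2*k) \<le> (2/\<alpha>)^k * (fact k * exp u)" .
    have g: "gw \<alpha> z = exp (- 2 * u)" using a by (simp add: gw_def u_def)
    have "(cmod z)^(2*k) * gw \<alpha> z \<le> (2/\<alpha>)^k * (fact k * exp u) * exp (- 2 * u)"
      unfolding g by (rule mult_right_mono[OF h]) simp
    also have "\<dots> = C * (exp u * exp (- 2 * u))" by (simp add: C_def mult_ac)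
    also have "exp u * exp (- 2 * u) = exp (- u)" by (simp add: exp_add[symmetric])
    finally show ?thesis by (simp add: u_def)
  qed
  have "Gam \<alpha> k \<le> (\<integral>\<^sup>+z. ennreal C * ennreal (exp (- (\<alpha>/2) * (cmod z)\<^sup>2)) \<partial>lborel)"
    unfolding Gam_def using pt
    by (intro nn_integral_mono) (simp add: ennreal_mult[symmetric] C_def a less_imp_le)
  also have "\<dots> = ennreal C * (\<integral>\<^sup>+z. ennreal (exp (- (\<alpha>/2) * (cmod z)\<^sup>2)) \<partial>lborel)"
  proof (rule nn_integral_cmult)
    have "(\<lambda>z::complex. exp (- (\<alpha>/2) * (cmod z)\<^sup>2)) \<in> borel_measurable borel"
      by (intro borel_measurable_continuous_onI continuous_intros)
    then show "(\<lambda>z::complex. ennreal (exp (- (\<alpha>/2) * (cmod z)\<^sup>2))) \<in> borel_measurable lborel"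
      using measurable_compose[OF _ measurable_ennreal] by simp
  qed
  also have "\<dots> < \<infinity>"
    using gauss2_finite[of "\<alpha>/2"] a by (simp add: ennreal_mult_less_top)
  finally show ?thesis .
qed

definition mrho :: "real \<Rightarrow> real \<Rightarrow> ennreal" where
  "mrho \<alpha> \<rho> = (\<integral>\<^sup>+z. ennreal (gw \<alpha> z * indicator {z. \<rho> \<le> cmod z} z) \<partial>(lborel :: complex measure))"

lemma mrho_pos:
  shows "mrho \<alpha> \<rho> > 0"
proof (rule ccontr)
  assume "\<not> mrho \<alpha> \<rho> > 0"
  then have z: "mrho \<alpha> \<rho> = 0" by (simp add: not_less)
  have cl: "{z::complex. \<rho> \<le> cmod z} \<in> sets borel"
    by (intro borel_closed closed_Collect_le continuous_intros)
  have m: "(\<lambda>z::complex. ennreal (gw \<alpha> z * indicator {z. \<rho> \<le> cmod z} z)) \<in> borel_measurable lborel"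
    using cl by measurable
  have "AE z in lborel. ennreal (gw \<alpha> z * indicator {z. \<rho> \<le> cmod z} z) = 0"
    using z unfolding mrho_def by (subst (asm) nn_integral_0_iff_AE[OF m]) 
  then have "AE z in lborel. z \<notin> {z::complex. \<rho> \<le> cmod z}"
    by eventually_elim (auto simp: gw_def indicator_def split: if_splits)
  then have "emeasure lborel {z::complex. \<rho> \<le> cmod z} = 0"
    using cl by (subst (asm) AE_iff_measurable[of "{z::complex. \<rho> \<le> cmod z}"]) auto
  moreover have "UNIV = ball (0::complex) \<rho> \<union> {z. \<rho> \<le> cmod z}" by auto
  ultimately have "emeasure lborel (UNIV :: complex set) \<le> emeasure lborel (ball (0::complex) \<rho>) + 0"
    using emeasure_subadditive[of "ball (0::complex) \<rho>" lborel "{z. \<rho> \<le> cmod z}"] cl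
    by simp
  then show False using emeasure_lborel_ball_finite[of "0::complex" \<rho>] by simp
qed

lemma Gam_lower:
  assumes "\<rho> > 0"
  shows "Gam \<alpha> k \<ge> ennreal (\<rho>^(2*k)) * mrho \<alpha> \<rho>"
proof -
  have cl: "{z::complex. \<rho> \<le> cmod z} \<in> sets borel"
    by (intro borel_closed closed_Collect_le continuous_intros)
  have "ennreal (\<rho>^(2*k)) * mrho \<alpha> \<rho> = (\<integral>\<^sup>+z. ennreal (\<rho>^(2*k)) * ennreal (gw \<alpha> z * indicator {z. \<rho> \<le> cmod z} z) \<partial>lborel)"
    unfolding mrho_def using cl by (intro nn_integral_cmult[symmetric]) measurable
  also have "\<dots> \<le> Gam \<alpha> k"
    unfolding Gam_def
  proof (intro nn_integral_mono)
    fix z :: complex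
    show "ennreal (\<rho>^(2*k)) * ennreal (gw \<alpha> z * indicator {z. \<rho> \<le> cmod z} z) \<le> ennreal ((cmod z)^(2*k) * gw \<alpha> z)"
    proof (cases "\<rho> \<le> cmod z")
      case True
      then have "\<rho>^(2*k) * gw \<alpha> z \<le> (cmod z)^(2*k) * gw \<alpha> z"
        using assms gw_pos[of \<alpha> z] by (intro mult_right_mono power_mono) auto
      then show ?thesis using True assms gw_pos[of \<alpha> z] by (simp add: ennreal_mult[symmetric])
    qed simp
  qed
  finally show ?thesis .
qed

lemma Gam_pos: "Gam \<alpha> k > 0"
proof -
  have "0 < ennreal (1^(2*k)) * mrho \<alpha> 1" using mrho_pos[of \<alpha> 1] by simp
  also have "\<dots> \<le> Gam \<alpha> k" by (rule Gam_lower) simp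
  finally show ?thesis .
qed

lemma mrho_finite: "\<alpha> > 0 \<Longrightarrow> mrho \<alpha> \<rho> < \<infinity>"
proof -
  assume a: "\<alpha> > 0"
  have "mrho \<alpha> \<rho> \<le> Gam \<alpha> 0"
    unfolding mrho_def Gam_def
    by (intro nn_integral_mono ennreal_leI) (auto simp: indicator_def gw_pos less_imp_le)
  then show ?thesis using Gam_finite[OF a, of 0] by auto
qed

definition tc :: "(complex \<Rightarrow> complex) \<Rightarrow> nat \<Rightarrow> complex" where
  "tc f k = (deriv ^^ k) f 0 / fact k"

definition abs_sum :: "(nat \<Rightarrow> complex) \<Rightarrow> bool" where
  "abs_sum c \<longleftrightarrow> (\<forall>R\<ge>0. summable (\<lambda>k. cmod (c k) * R^k))"

lemma abs_sum_norm: "abs_sum c \<Longrightarrow> summable (\<lambda>k. norm (c k * z^k))"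
  unfolding abs_sum_def by (auto simp: norm_mult norm_power)

lemma abs_sum_sums: "abs_sum c \<Longrightarrow> (\<lambda>k. c k * z^k) sums (\<Sum>k. c k * z^k)"
  by (rule summable_sums[OF summable_norm_cancel[OF abs_sum_norm]])

lemma taylor_entire:
  assumes "f holomorphic_on UNIV"
  shows "(\<lambda>k. tc f k * z^k) sums f z" and "abs_sum (tc f)"
proof -
  have s: "(\<lambda>k. tc f k * w^k) sums f w" for w
  proof -
    have "f holomorphic_on ball 0 (cmod w + 1)" using assms by (rule holomorphic_on_subset) auto
    from holomorphic_power_series[OF this, of w] show ?thesis by (simp add: tc_def)
  qed
  then show "(\<lambda>k. tc f k * z^k) sums f z" .
  show "abs_sum (tc f)" unfolding abs_sum_def
  proof (intro allI impI)
    fix R :: real assume R: "R \<ge> 0"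
    have "summable (\<lambda>k. tc f k * (complex_of_real (R + 1))^k)" using s sums_summable by blast
    from powser_insidea[OF this, of "complex_of_real R"] R
    have "summable (\<lambda>k. norm (tc f k * (complex_of_real R)^k))" by simp
    then show "summable (\<lambda>k. cmod (tc f k) * R^k)"
      using R by (simp add: norm_mult norm_power)
  qed
qed

lemma powser_entire:
  assumes "abs_sum e"
  shows "(\<lambda>z. \<Sum>k. e k * z^k) holomorphic_on UNIV"
proof -
  have h: "(\<lambda>z. \<Sum>k. e k * z^k) holomorphic_on ball 0 r" for r
    by (rule power_series_holomorphic) (use abs_sum_sums[OF assms] in simp)
  show ?thesis
    unfolding holomorphic_on_open[OF open_UNIV]
  proof
    fix x :: complex
    have "x \<in> ball 0 (cmod x + 1)" by simp
    with h[of "cmod x + 1"] show "\<exists>f'. ((\<lambda>z. \<Sum>k. e k * z^k) has_field_derivative f') (at x)"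
      unfolding holomorphic_on_open[OF open_ball] by blast
  qed
qed

definition Amu :: "real measure \<Rightarrow> nat \<Rightarrow> ennreal" where
  "Amu \<mu> n = (\<integral>\<^sup>+ t. ennreal (1 / t ^ (n + 1)) * indicator {1..} t \<partial>\<mu>)"

definition amu :: "real measure \<Rightarrow> nat \<Rightarrow> real" where
  "amu \<mu> n = (\<integral>t. indicator {1..} t * (1 / t ^ (n + 1)) \<partial>\<mu>)"

lemma Amu_mono: "m \<le> n \<Longrightarrow> Amu \<mu> n \<le> Amu \<mu> m"
  unfolding Amu_def
proof (intro nn_integral_mono)
  fix t :: real assume mn: "m \<le> n"
  show "ennreal (1 / t ^ (n + 1)) * indicator {1..} t \<le> ennreal (1 / t ^ (m + 1)) * indicator {1..} t"
  proof (cases "t \<ge> 1")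
    case True
    then have "t ^ (m + 1) \<le> t ^ (n + 1)" using mn by (intro power_increasing) auto
    then have "1 / t ^ (n + 1) \<le> 1 / t ^ (m + 1)" using True
      by (intro divide_left_mono) auto
    then show ?thesis using True by (simp add: ennreal_leI)
  qed simp
qed

context
  fixes \<mu> :: "real measure"
  assumes sets_mu[measurable_cong]: "sets \<mu> = sets borel"
    and A0: "Amu \<mu> 0 < \<infinity>"
begin

lemma amu_meas[measurable]: "(\<lambda>t. indicator {1..} t * (1 / t ^ (n + 1)) :: real) \<in> borel_measurable \<mu>"
  by measurable

lemma amu_integrable: "integrable \<mu> (\<lambda>t. indicator {1..} t * (1 / t ^ (n + 1)) :: real)"
proof (rule integrableI_bounded)
  have "(\<integral>\<^sup>+ t. ennreal (norm (indicator {1..} t * (1 / t ^ (n + 1)) :: real)) \<partial>\<mu>) = Amu \<mu> n"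
    unfolding Amu_def by (intro nn_integral_cong) (auto simp: indicator_def)
  also have "\<dots> \<le> Amu \<mu> 0" by (rule Amu_mono) simp
  finally show "(\<integral>\<^sup>+ t. ennreal (norm (indicator {1..} t * (1 / t ^ (n + 1)) :: real)) \<partial>\<mu>) < \<infinity>"
    using A0 by auto
qed simp

lemma amu_nonneg: "amu \<mu> n \<ge> 0"
  unfolding amu_def by (intro integral_nonneg_AE AE_I2) (auto simp: indicator_def)

lemma ennreal_amu: "ennreal (amu \<mu> n) = Amu \<mu> n"
proof -
  have "Amu \<mu> n = (\<integral>\<^sup>+ t. ennreal (indicator {1..} t * (1 / t ^ (n + 1))) \<partial>\<mu>)"
    unfolding Amu_def by (intro nn_integral_cong) (auto simp: indicator_def)
  also have "\<dots> = ennreal (amu \<mu> n)"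
    unfolding amu_def by (rule nn_integral_eq_integral[OF amu_integrable]) (auto simp: indicator_def)
  finally show ?thesis ..
qed

lemma amu_mono: "m \<le> n \<Longrightarrow> amu \<mu> n \<le> amu \<mu> m"
  using Amu_mono[of m n \<mu>] by (simp add: ennreal_amu[symmetric] amu_nonneg)

lemma haus_series:
  assumes mu01: "emeasure \<mu> {0<..<1} = 0"
    and c: "abs_sum c" and f: "\<And>w. f w = (\<Sum>k. c k * w^k)"
  shows "hausdorff_op \<mu> f z = (\<Sum>k. (complex_of_real (amu \<mu> k) * c k) * z^k)"
proof -
  have "f holomorphic_on UNIV" using powser_entire[OF c] by (simp add: f[abs_def])
  then have "continuous_on UNIV f" by (rule holomorphic_on_imp_continuous_on)
  then have mf[measurable]: "f \<in> borel_measurable borel" by (rule borel_measurable_continuous_onI)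
  define g where "g = (\<lambda>k t. (c k * z^k) * complex_of_real (indicator {1..} t * (1 / t ^ (k + 1))))"
  have "hausdorff_op \<mu> f z = (\<integral>t. indicator {0<..} t *\<^sub>R (f (z / complex_of_real t) / complex_of_real t) \<partial>\<mu>)"
    by (simp add: hausdorff_op_def set_lebesgue_integral_def)
  also have "\<dots> = (\<integral>t. (\<Sum>k. g k t) \<partial>\<mu>)"
  proof (rule integral_cong_AE)
    show "(\<lambda>t. indicator {0<..} t *\<^sub>R (f (z / complex_of_real t) / complex_of_real t)) \<in> borel_measurable \<mu>"
      by measurable
    show "(\<lambda>t. \<Sum>k. g k t) \<in> borel_measurable \<mu>"
      unfolding g_def by measurable
    have "{0<..<1::real} \<in> null_sets \<mu>" using mu01 by (simp add: null_sets_def sets_mu)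
    then show "AE t in \<mu>. indicator {0<..} t *\<^sub>R (f (z / complex_of_real t) / complex_of_real t) = (\<Sum>k. g k t)"
    proof (rule AE_I')
      show "{t \<in> space \<mu>. \<not> indicator {0<..} t *\<^sub>R (f (z / complex_of_real t) / complex_of_real t) = (\<Sum>k. g k t)}
          \<subseteq> {0<..<1}"
      proof
        fix t :: real
        assume "t \<in> {t \<in> space \<mu>. \<not> indicator {0<..} t *\<^sub>R (f (z / complex_of_real t) / complex_of_real t) = (\<Sum>k. g k t)}"
        then have ne: "\<not> indicator {0<..} t *\<^sub>R (f (z / complex_of_real t) / complex_of_real t) = (\<Sum>k. g k t)"
          by simp
        have "0 < t"
        proof (rule ccontr)
          assume "\<not> 0 < t"
          then show False using ne by (simp add: g_def)
        qed
        moreover have "t < 1"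
        proof (rule ccontr)
          assume "\<not> t < 1"
          then have t1: "t \<ge> 1" by simp
          have "f (z / complex_of_real t) / complex_of_real t = (\<Sum>k. c k * (z / complex_of_real t)^k) / complex_of_real t"
            by (simp add: f)
          also have "\<dots> = (\<Sum>k. c k * (z / complex_of_real t)^k / complex_of_real t)"
            by (rule suminf_divide[symmetric]) (rule summable_norm_cancel[OF abs_sum_norm[OF c]])
          also have "\<dots> = (\<Sum>k. g k t)"
            using t1 by (intro suminf_cong) (simp add: g_def power_divide field_simps)
          finally show False using ne t1 by simp
        qed
        ultimately show "t \<in> {0<..<1}" by simp
      qed
    qed
  qed
  also have "\<dots> = (\<Sum>k. integral\<^sup>L \<mu> (g k))"
  proof (rule integral_suminf)
    show "integrable \<mu> (g k)" for k
      unfolding g_def by (intro integrable_mult_right integrable_of_real amu_integrable)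
    show "AE t in \<mu>. summable (\<lambda>k. norm (g k t))"
    proof (intro AE_I2 summable_comparison_test'[OF abs_sum_norm[OF c, of z]])
      fix t :: real and k :: nat
      show "norm (norm (g k t)) \<le> norm (c k * z^k)"
      proof (cases "t \<ge> 1")
        case True
        have "1 \<le> t ^ (k + 1)" using True by (intro one_le_power) 
        then have le1: "1 / t ^ (k + 1) \<le> 1" by simp
        have "norm (norm (g k t)) = norm (c k * z^k) * \<bar>1 / t ^ (k + 1)\<bar>"
          using True unfolding g_def by (simp only: norm_ge_zero real_norm_def abs_of_nonneg norm_mult norm_of_real) (simp add: indicator_def)
        also have "\<dots> \<le> norm (c k * z^k) * 1"
          using le1 True by (intro mult_left_mono) auto
        finally show ?thesis by simp
      qed (simp add: g_def)
    qed
    show "summable (\<lambda>k. \<integral>t. norm (g k t) \<partial>\<mu>)"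
    proof (rule summable_comparison_test'[where g="\<lambda>k. norm (c k * z^k) * amu \<mu> 0"])
      show "summable (\<lambda>k. norm (c k * z^k) * amu \<mu> 0)"
        by (intro summable_mult2 abs_sum_norm[OF c])
      fix k
      have "(\<integral>t. norm (g k t) \<partial>\<mu>) = (\<integral>t. norm (c k * z^k) * (indicator {1..} t * (1 / t ^ (k + 1))) \<partial>\<mu>)"
        by (rule Bochner_Integration.integral_cong[OF refl]) (auto simp: g_def norm_mult norm_divide norm_power indicator_def)
      also have "\<dots> = norm (c k * z^k) * amu \<mu> k"
        unfolding amu_def by (rule integral_mult_right_zero)
      also have "\<dots> \<le> norm (c k * z^k) * amu \<mu> 0"
        by (intro mult_left_mono amu_mono) auto
      finally show "norm (\<integral>t. norm (g k t) \<partial>\<mu>) \<le> norm (c k * z^k) * amu \<mu> 0"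
        by (simp add: integral_nonneg_AE)
    qed
  qed
  also have "\<dots> = (\<Sum>k. (complex_of_real (amu \<mu> k) * c k) * z^k)"
  proof (intro suminf_cong)
    fix k
    have "integral\<^sup>L \<mu> (g k) = (c k * z^k) * (\<integral>t. complex_of_real (indicator {1..} t * (1 / t ^ (k + 1))) \<partial>\<mu>)"
      unfolding g_def by (rule integral_mult_right_zero)
    also have "\<dots> = (c k * z^k) * complex_of_real (amu \<mu> k)"
      unfolding amu_def by (simp only: integral_complex_of_real)
    finally show "integral\<^sup>L \<mu> (g k) = (complex_of_real (amu \<mu> k) * c k) * z^k"
      by (simp add: mult_ac)
  qed
  finally show ?thesis .
qed

end

definition gk :: "real \<Rightarrow> nat \<Rightarrow> real" where
  "gk \<alpha> k = enn2real (Gam \<alpha> k)"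

lemma Gam_eq: "\<alpha> > 0 \<Longrightarrow> Gam \<alpha> k = ennreal (gk \<alpha> k)"
  using Gam_finite[of \<alpha> k] by (simp add: gk_def less_top)

lemma gk_pos: "\<alpha> > 0 \<Longrightarrow> gk \<alpha> k > 0"
  using Gam_pos[of \<alpha> k] Gam_finite[of \<alpha> k] unfolding gk_def
  by (simp add: enn2real_positive_iff less_top)

lemma coef_nonneg: "\<alpha> > 0 \<Longrightarrow> 0 \<le> (cmod x)\<^sup>2 * gk \<alpha> k"
  using gk_pos[of \<alpha> k] by simp

lemma fock_integrand: "(\<lambda>z. (cmod (f z))\<^sup>2 * exp (- \<alpha> * (cmod z)\<^sup>2)) = (\<lambda>z. (cmod (f z))\<^sup>2 * gw \<alpha> z)"
  by (simp add: gw_def)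

lemma fock_from_coeffs:
  assumes a: "\<alpha> > 0" and c: "abs_sum c" and s: "summable (\<lambda>k. (cmod (c k))\<^sup>2 * gk \<alpha> k)"
  shows "(\<lambda>z. \<Sum>k. c k * z^k) \<in> fock_space \<alpha>"
    and "fock_norm \<alpha> (\<lambda>z. \<Sum>k. c k * z^k) = sqrt (\<alpha> / pi * (\<Sum>k. (cmod (c k))\<^sup>2 * gk \<alpha> k))"
proof -
  define f where "f = (\<lambda>z. \<Sum>k. c k * z^k)"
  have hol: "f holomorphic_on UNIV" unfolding f_def by (rule powser_entire[OF c])
  then have "continuous_on UNIV f" by (rule holomorphic_on_imp_continuous_on)
  then have "(\<lambda>z. (cmod (f z))\<^sup>2 * gw \<alpha> z) \<in> borel_measurable borel"
    by (intro borel_measurable_continuous_onI continuous_intros)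
  then have m: "(\<lambda>z. (cmod (f z))\<^sup>2 * gw \<alpha> z) \<in> borel_measurable lborel" by simp
  have "(\<integral>\<^sup>+z. ennreal ((cmod (f z))\<^sup>2 * gw \<alpha> z) \<partial>lborel) = (\<Sum>k. ennreal ((cmod (c k))\<^sup>2) * Gam \<alpha> k)"
    unfolding f_def by (rule parseval[OF less_imp_le[OF a]]) (use c in \<open>auto simp: abs_sum_def\<close>)
  also have "\<dots> = (\<Sum>k. ennreal ((cmod (c k))\<^sup>2 * gk \<alpha> k))"
    using a gk_pos[OF a] by (intro suminf_cong) (simp add: Gam_eq ennreal_mult less_imp_le)
  also have "\<dots> = ennreal (\<Sum>k. (cmod (c k))\<^sup>2 * gk \<alpha> k)"
    using s gk_pos[OF a] by (intro suminf_ennreal2) (auto intro!: coef_nonneg a)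
  finally have eq: "(\<integral>\<^sup>+z. ennreal ((cmod (f z))\<^sup>2 * gw \<alpha> z) \<partial>lborel) = ennreal (\<Sum>k. (cmod (c k))\<^sup>2 * gk \<alpha> k)" .
  have nn: "AE z in lborel. 0 \<le> (cmod (f z))\<^sup>2 * gw \<alpha> z" by (simp add: gw_pos less_imp_le)
  have sn: "0 \<le> (\<Sum>k. (cmod (c k))\<^sup>2 * gk \<alpha> k)"
    using s gk_pos[OF a] by (intro suminf_nonneg) (auto intro!: coef_nonneg a)
  have ii: "integrable lborel (\<lambda>z. (cmod (f z))\<^sup>2 * gw \<alpha> z) \<and>
      integral\<^sup>L lborel (\<lambda>z. (cmod (f z))\<^sup>2 * gw \<alpha> z) = (\<Sum>k. (cmod (c k))\<^sup>2 * gk \<alpha> k)"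
    using nn_integral_eq_integrable[OF m nn sn] eq by simp
  show "(\<lambda>z. \<Sum>k. c k * z^k) \<in> fock_space \<alpha>"
    using hol ii unfolding f_def fock_space_def fock_integrand by simp
  show "fock_norm \<alpha> (\<lambda>z. \<Sum>k. c k * z^k) = sqrt (\<alpha> / pi * (\<Sum>k. (cmod (c k))\<^sup>2 * gk \<alpha> k))"
    using ii unfolding f_def fock_norm_def fock_integrand by simp
qed

lemma fock_coeffs:
  assumes a: "\<alpha> > 0" and f: "f \<in> fock_space \<alpha>"
  shows "abs_sum (tc f)" and "\<And>z. f z = (\<Sum>k. tc f k * z^k)"
    and "summable (\<lambda>k. (cmod (tc f k))\<^sup>2 * gk \<alpha> k)"
    and "fock_norm \<alpha> f = sqrt (\<alpha> / pi * (\<Sum>k. (cmod (tc f k))\<^sup>2 * gk \<alpha> k))"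
proof -
  have hol: "f holomorphic_on UNIV" using f by (simp add: fock_space_def)
  show c: "abs_sum (tc f)" by (rule taylor_entire(2)[OF hol])
  show fz: "f z = (\<Sum>k. tc f k * z^k)" for z
    using taylor_entire(1)[OF hol, of z] by (simp add: sums_iff)
  then have feq: "f = (\<lambda>z. \<Sum>k. tc f k * z^k)" by auto
  have int: "integrable lborel (\<lambda>z. (cmod (f z))\<^sup>2 * gw \<alpha> z)"
    using f unfolding fock_space_def fock_integrand by simp
  have "(\<integral>\<^sup>+z. ennreal ((cmod (f z))\<^sup>2 * gw \<alpha> z) \<partial>lborel) = (\<Sum>k. ennreal ((cmod (tc f k))\<^sup>2) * Gam \<alpha> k)"
    by (subst feq, rule parseval[OF less_imp_le[OF a]]) (use c in \<open>auto simp: abs_sum_def\<close>)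
  also have "\<dots> = (\<Sum>k. ennreal ((cmod (tc f k))\<^sup>2 * gk \<alpha> k))"
    using a gk_pos[OF a] by (intro suminf_cong) (simp add: Gam_eq ennreal_mult less_imp_le)
  finally have eq: "(\<integral>\<^sup>+z. ennreal ((cmod (f z))\<^sup>2 * gw \<alpha> z) \<partial>lborel) = (\<Sum>k. ennreal ((cmod (tc f k))\<^sup>2 * gk \<alpha> k))" .
  have "(\<integral>\<^sup>+z. ennreal ((cmod (f z))\<^sup>2 * gw \<alpha> z) \<partial>lborel) = ennreal (integral\<^sup>L lborel (\<lambda>z. (cmod (f z))\<^sup>2 * gw \<alpha> z))"
    by (rule nn_integral_eq_integral[OF int]) (simp add: gw_pos less_imp_le)
  then have "(\<Sum>k. ennreal ((cmod (tc f k))\<^sup>2 * gk \<alpha> k)) \<noteq> top" using eq by simp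
  then show s: "summable (\<lambda>k. (cmod (tc f k))\<^sup>2 * gk \<alpha> k)"
    by (rule summable_suminf_not_top[rotated]) (use gk_pos[OF a] in \<open>auto intro!: coef_nonneg a\<close>)
  have "fock_norm \<alpha> (\<lambda>z. \<Sum>k. tc f k * z^k) = sqrt (\<alpha> / pi * (\<Sum>k. (cmod (tc f k))\<^sup>2 * gk \<alpha> k))"
    by (rule fock_from_coeffs(2)[OF a c s])
  then show "fock_norm \<alpha> f = sqrt (\<alpha> / pi * (\<Sum>k. (cmod (tc f k))\<^sup>2 * gk \<alpha> k))"
    by (simp add: feq[symmetric])
qed

lemma diagonal_bounded:
  fixes c :: "nat \<Rightarrow> nat \<Rightarrow> complex"
  assumes bd: "\<And>k. bounded (range (\<lambda>n. c n k))"
  shows "\<exists>r. strict_mono r \<and> (\<forall>k. \<exists>l. (\<lambda>i. c (r i) k) \<longlonglongrightarrow> l)"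
proof -
  interpret subseqs "\<lambda>k s. \<exists>l. (\<lambda>i. c (s i) k) \<longlonglongrightarrow> l"
  proof
    fix k and s :: "nat \<Rightarrow> nat"
    assume "strict_mono s"
    have "bounded (range (\<lambda>i. c (s i) k))"
      by (rule bounded_subset[OF bd[of k]]) auto
    from bounded_imp_convergent_subsequence[OF this]
    obtain l r where "strict_mono r" "((\<lambda>i. c (s i) k) \<circ> r) \<longlonglongrightarrow> l" by blast
    then show "\<exists>r'. strict_mono r' \<and> (\<exists>l. (\<lambda>i. c ((s \<circ> r') i) k) \<longlonglongrightarrow> l)"
      by (auto simp: o_def)
  qed
  have "\<exists>l. (\<lambda>i. c (diagseq i) k) \<longlonglongrightarrow> l" for k
  proof -
    obtain l where "(\<lambda>i. c ((diagseq \<circ> (+) (Suc k)) i) k) \<longlonglongrightarrow> l"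
    proof (atomize_elim, rule diagseq_holds)
      fix r s n
      assume "strict_mono (r :: nat \<Rightarrow> nat)"
      assume "\<exists>l. (\<lambda>i. c (s i) n) \<longlonglongrightarrow> l"
      then obtain l where "((\<lambda>i. c i n) \<circ> s) \<longlonglongrightarrow> l" by (auto simp: o_def)
      then have "((\<lambda>i. c i n) \<circ> s \<circ> r) \<longlonglongrightarrow> l" using \<open>strict_mono r\<close>
        by (rule LIMSEQ_subseq_LIMSEQ)
      then show "\<exists>l. (\<lambda>i. c ((s \<circ> r) i) n) \<longlonglongrightarrow> l" by (auto simp: o_def)
    qed
    then have "(\<lambda>i. c (diagseq (i + Suc k)) k) \<longlonglongrightarrow> l" by (simp add: ac_simps)
    then have "(\<lambda>i. c (diagseq i) k) \<longlonglongrightarrow> l" by (rule LIMSEQ_offset)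
    then show ?thesis ..
  qed
  then show ?thesis using subseq_diagseq by blast
qed

context
  fixes \<mu> :: "real measure" and \<alpha> :: real
  assumes a: "\<alpha> > 0"
    and sets_mu[measurable_cong]: "sets \<mu> = sets borel"
    and A0: "Amu \<mu> 0 < \<infinity>"
    and mu01: "emeasure \<mu> {0<..<1} = 0"
begin

lemma H_coeffs:
  assumes c: "abs_sum c" and f: "\<And>w. f w = (\<Sum>k. c k * w^k)"
    and s: "summable (\<lambda>k. (cmod (c k))\<^sup>2 * gk \<alpha> k)"
  shows "hausdorff_op \<mu> f = (\<lambda>z. \<Sum>k. (complex_of_real (amu \<mu> k) * c k) * z^k)"
    and "abs_sum (\<lambda>k. complex_of_real (amu \<mu> k) * c k)"
    and "summable (\<lambda>k. (cmod (complex_of_real (amu \<mu> k) * c k))\<^sup>2 * gk \<alpha> k)"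
proof -
  show "hausdorff_op \<mu> f = (\<lambda>z. \<Sum>k. (complex_of_real (amu \<mu> k) * c k) * z^k)"
    using haus_series[OF sets_mu A0 mu01 c f] by auto
  have bd: "cmod (complex_of_real (amu \<mu> k) * c k) \<le> amu \<mu> 0 * cmod (c k)" for k
    using amu_mono[OF sets_mu A0, of 0 k] amu_nonneg[OF sets_mu A0, of k]
    by (simp add: norm_mult mult_right_mono)
  show "abs_sum (\<lambda>k. complex_of_real (amu \<mu> k) * c k)"
    unfolding abs_sum_def
  proof (intro allI impI)
    fix R :: real assume R: "R \<ge> 0"
    have "summable (\<lambda>k. amu \<mu> 0 * (cmod (c k) * R^k))"
      using c R unfolding abs_sum_def by (intro summable_mult) auto
    then show "summable (\<lambda>k. cmod (complex_of_real (amu \<mu> k) * c k) * R^k)"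
    proof (rule summable_comparison_test')
      fix k
      show "norm (cmod (complex_of_real (amu \<mu> k) * c k) * R^k) \<le> amu \<mu> 0 * (cmod (c k) * R^k)"
        using bd[of k] R by (simp add: mult_right_mono mult.assoc[symmetric])
    qed
  qed
  have "summable (\<lambda>k. (amu \<mu> 0)\<^sup>2 * ((cmod (c k))\<^sup>2 * gk \<alpha> k))"
    using s by (rule summable_mult)
  then show "summable (\<lambda>k. (cmod (complex_of_real (amu \<mu> k) * c k))\<^sup>2 * gk \<alpha> k)"
  proof (rule summable_comparison_test')
    fix k
    have "(cmod (complex_of_real (amu \<mu> k) * c k))\<^sup>2 \<le> (amu \<mu> 0 * cmod (c k))\<^sup>2"
      using bd[of k] by (intro power_mono) auto
    then have "(cmod (complex_of_real (amu \<mu> k) * c k))\<^sup>2 * gk \<alpha> k \<le> (amu \<mu> 0 * cmod (c k))\<^sup>2 * gk \<alpha> k"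
      using gk_pos[OF a, of k] by (intro mult_right_mono) auto
    then show "norm ((cmod (complex_of_real (amu \<mu> k) * c k))\<^sup>2 * gk \<alpha> k) \<le> (amu \<mu> 0)\<^sup>2 * ((cmod (c k))\<^sup>2 * gk \<alpha> k)"
      using gk_pos[OF a, of k] by (simp add: power_mult_distrib mult_ac)
  qed
qed

lemma H_maps:
  assumes "f \<in> fock_space \<alpha>"
  shows "hausdorff_op \<mu> f \<in> fock_space \<alpha>"
proof -
  note fc = fock_coeffs[OF a assms]
  note hc = H_coeffs[OF fc(1) fc(2) fc(3)]
  show ?thesis unfolding hc(1) by (rule fock_from_coeffs(1)[OF a hc(2) hc(3)])
qed

end

lemma term_le_suminf:
  fixes b :: "nat \<Rightarrow> real"
  assumes "summable b" "\<And>n. 0 \<le> b n"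
  shows "b k \<le> suminf b"
  using sum_le_suminf[OF assms(1), of "{k}"] assms(2) by simp

lemma sq_diff_le: "(cmod (x - y))\<^sup>2 \<le> 2 * (cmod x)\<^sup>2 + 2 * (cmod y)\<^sup>2"
proof -
  have "cmod (x - y) \<le> cmod x + cmod y" by (rule norm_triangle_ineq4)
  then have "(cmod (x - y))\<^sup>2 \<le> (cmod x + cmod y)\<^sup>2" by (intro power_mono) auto
  also have "\<dots> \<le> 2 * (cmod x)\<^sup>2 + 2 * (cmod y)\<^sup>2"
    using sum_squares_bound[of "cmod x" "cmod y"] by (simp add: power2_eq_square algebra_simps)
  finally show ?thesis .
qed

lemma gk_lower:
  assumes a: "\<alpha> > 0" and r: "\<rho> > 0"
  shows "\<exists>m>0. \<forall>k. gk \<alpha> k \<ge> \<rho>^(2*k) * m"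
proof (intro exI conjI allI)
  define m where "m = enn2real (mrho \<alpha> \<rho>)"
  have mm: "mrho \<alpha> \<rho> = ennreal m"
    using mrho_finite[OF a, of \<rho>] by (simp add: m_def less_top)
  show "m > 0" using mrho_pos[of \<alpha> \<rho>] mrho_finite[OF a, of \<rho>] unfolding m_def
    by (simp add: enn2real_positive_iff less_top)
  fix k
  have "ennreal (\<rho>^(2*k) * m) = ennreal (\<rho>^(2*k)) * mrho \<alpha> \<rho>"
    using r \<open>m > 0\<close> by (simp add: mm ennreal_mult)
  also have "\<dots> \<le> Gam \<alpha> k" by (rule Gam_lower[OF r])
  also have "\<dots> = ennreal (gk \<alpha> k)" by (rule Gam_eq[OF a])
  finally show "gk \<alpha> k \<ge> \<rho>^(2*k) * m"
    using gk_pos[OF a, of k] by (simp add: ennreal_le_iff less_imp_le)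
qed

lemma abs_sum_from_L2:
  assumes a: "\<alpha> > 0" and s: "summable (\<lambda>k. (cmod (d k))\<^sup>2 * gk \<alpha> k)"
  shows "abs_sum d"
  unfolding abs_sum_def
proof (intro allI impI)
  fix R :: real assume R: "R \<ge> 0"
  define \<rho> where "\<rho> = R + 1"
  have r: "\<rho> > 0" using R by (simp add: \<rho>_def)
  obtain m where m: "m > 0" "\<And>k. gk \<alpha> k \<ge> \<rho>^(2*k) * m" using gk_lower[OF a r] by blast
  define B where "B = (\<Sum>k. (cmod (d k))\<^sup>2 * gk \<alpha> k)"
  have tb: "(cmod (d k))\<^sup>2 * gk \<alpha> k \<le> B" for k
    unfolding B_def by (rule term_le_suminf[OF s]) (rule coef_nonneg[OF a])
  have B0: "0 \<le> B" using tb[of 0] coef_nonneg[OF a, of "d 0" 0] by linarith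
  have bnd: "cmod (d k) * \<rho>^k \<le> sqrt (B / m)" for k
  proof -
    have "(cmod (d k) * \<rho>^k)\<^sup>2 * m = (cmod (d k))\<^sup>2 * (\<rho>^(2*k) * m)"
      by (simp add: power_mult_distrib power_mult[symmetric] mult.commute)
    also have "\<dots> \<le> (cmod (d k))\<^sup>2 * gk \<alpha> k" by (intro mult_left_mono m(2)) simp
    also have "\<dots> \<le> B" by (rule tb)
    finally have "(cmod (d k) * \<rho>^k)\<^sup>2 \<le> B / m" using m(1) by (simp add: field_simps)
    then show ?thesis using r by (intro real_le_rsqrt) simp
  qed
  have q: "norm (R / \<rho>) < 1" using R by (simp add: \<rho>_def)
  have "summable (\<lambda>k. sqrt (B / m) * (R / \<rho>)^k)"
    by (intro summable_mult summable_geometric q)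
  then show "summable (\<lambda>k. cmod (d k) * R^k)"
  proof (rule summable_comparison_test')
    fix k
    have "cmod (d k) * R^k = (cmod (d k) * \<rho>^k) * (R / \<rho>)^k"
      using r by (simp add: power_divide)
    also have "\<dots> \<le> sqrt (B / m) * (R / \<rho>)^k"
      using bnd[of k] R r by (intro mult_right_mono) auto
    finally show "norm (cmod (d k) * R^k) \<le> sqrt (B / m) * (R / \<rho>)^k"
      using R by simp
  qed
qed

lemma L2_diff:
  assumes a: "\<alpha> > 0" and sc: "summable (\<lambda>k. (cmod (c k))\<^sup>2 * gk \<alpha> k)"
    and sd: "summable (\<lambda>k. (cmod (d k))\<^sup>2 * gk \<alpha> k)"
  shows "summable (\<lambda>k. (cmod (c k - d k))\<^sup>2 * gk \<alpha> k)"
    and "(\<Sum>k. (cmod (c k - d k))\<^sup>2 * gk \<alpha> k) \<le> 2 * (\<Sum>k. (cmod (c k))\<^sup>2 * gk \<alpha> k) + 2 * (\<Sum>k. (cmod (d k))\<^sup>2 * gk \<alpha> k)"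
proof -
  have le: "(cmod (c k - d k))\<^sup>2 * gk \<alpha> k \<le> 2 * ((cmod (c k))\<^sup>2 * gk \<alpha> k) + 2 * ((cmod (d k))\<^sup>2 * gk \<alpha> k)" for k
    using sq_diff_le[of "c k" "d k"] gk_pos[OF a, of k]
    by (metis (no_types, opaque_lifting) distrib_right less_imp_le mult.assoc mult_right_mono)
  have s2: "summable (\<lambda>k. 2 * ((cmod (c k))\<^sup>2 * gk \<alpha> k) + 2 * ((cmod (d k))\<^sup>2 * gk \<alpha> k))"
    by (intro summable_add summable_mult sc sd)
  show s: "summable (\<lambda>k. (cmod (c k - d k))\<^sup>2 * gk \<alpha> k)"
    by (rule summable_comparison_test'[OF s2]) (use le coef_nonneg[OF a] in auto)
  have "(\<Sum>k. (cmod (c k - d k))\<^sup>2 * gk \<alpha> k) \<le> (\<Sum>k. 2 * ((cmod (c k))\<^sup>2 * gk \<alpha> k) + 2 * ((cmod (d k))\<^sup>2 * gk \<alpha> k))"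
    by (rule suminf_le[OF le s s2])
  also have "\<dots> = 2 * (\<Sum>k. (cmod (c k))\<^sup>2 * gk \<alpha> k) + 2 * (\<Sum>k. (cmod (d k))\<^sup>2 * gk \<alpha> k)"
    using sc sd by (simp add: suminf_add[symmetric] suminf_mult)
  finally show "(\<Sum>k. (cmod (c k - d k))\<^sup>2 * gk \<alpha> k) \<le> 2 * (\<Sum>k. (cmod (c k))\<^sup>2 * gk \<alpha> k) + 2 * (\<Sum>k. (cmod (d k))\<^sup>2 * gk \<alpha> k)" .
qed

lemma series_diff:
  assumes c: "abs_sum c" and d: "abs_sum d"
  shows "(\<lambda>z. \<Sum>k. c k * z^k) - (\<lambda>z. \<Sum>k. d k * z^k) = (\<lambda>z. \<Sum>k. (c k - d k) * z^k)"
    and "abs_sum (\<lambda>k. c k - d k)"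
proof -
  show "(\<lambda>z. \<Sum>k. c k * z^k) - (\<lambda>z. \<Sum>k. d k * z^k) = (\<lambda>z. \<Sum>k. (c k - d k) * z^k)"
  proof
    fix z
    have "(\<Sum>k. c k * z^k) - (\<Sum>k. d k * z^k) = (\<Sum>k. c k * z^k - d k * z^k)"
      by (rule suminf_diff[OF summable_norm_cancel[OF abs_sum_norm[OF c]] summable_norm_cancel[OF abs_sum_norm[OF d]]])
    then show "((\<lambda>z. \<Sum>k. c k * z^k) - (\<lambda>z. \<Sum>k. d k * z^k)) z = (\<Sum>k. (c k - d k) * z^k)"
      by (simp add: algebra_simps)
  qed
  show "abs_sum (\<lambda>k. c k - d k)"
    unfolding abs_sum_def
  proof (intro allI impI)
    fix R :: real assume R: "R \<ge> 0"
    have "summable (\<lambda>k. cmod (c k) * R^k + cmod (d k) * R^k)"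
      using c d R unfolding abs_sum_def by (intro summable_add) auto
    then show "summable (\<lambda>k. cmod (c k - d k) * R^k)"
    proof (rule summable_comparison_test')
      fix k
      show "norm (cmod (c k - d k) * R^k) \<le> cmod (c k) * R^k + cmod (d k) * R^k"
        using R norm_triangle_ineq4[of "c k" "d k"]
        by (simp add: distrib_right[symmetric] mult_right_mono)
    qed
  qed
qed

lemma tail_lemma:
  fixes a :: "nat \<Rightarrow> real" and v :: "nat \<Rightarrow> nat \<Rightarrow> real"
  assumes a: "a \<longlonglongrightarrow> 0" and v0: "\<And>i k. v i k \<ge> 0" and vs: "\<And>i. summable (v i)"
    and vC: "\<And>i. suminf (v i) \<le> C" and vl: "\<And>k. (\<lambda>i. v i k) \<longlonglongrightarrow> 0"
  shows "(\<lambda>i. \<Sum>k. (a k)\<^sup>2 * v i k) \<longlonglongrightarrow> 0"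
proof -
  have C0: "C \<ge> 0" using vC[of 0] suminf_nonneg[OF vs[of 0] v0] by linarith
  have t2: "(\<lambda>k. (a k)\<^sup>2) \<longlonglongrightarrow> 0" using tendsto_power[OF a, of 2] by simp
  obtain M where M: "\<And>k. (a k)\<^sup>2 \<le> M"
  proof -
    have "convergent (\<lambda>k. (a k)\<^sup>2)" by (rule convergentI[OF t2])
    then have "Bseq (\<lambda>k. (a k)\<^sup>2)" by (rule convergent_imp_Bseq)
    then obtain M where "\<And>k. norm ((a k)\<^sup>2) \<le> M" by (auto simp: Bseq_def)
    then show ?thesis using that by fastforce
  qed
  have sav: "summable (\<lambda>k. (a k)\<^sup>2 * v i k)" for i
  proof (rule summable_comparison_test')
    show "summable (\<lambda>k. M * v i k)" by (intro summable_mult vs)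
    fix k show "norm ((a k)\<^sup>2 * v i k) \<le> M * v i k"
      using M[of k] v0[of i k] by (simp add: mult_right_mono)
  qed
  show ?thesis
  proof (rule order_tendstoI)
    fix e :: real assume "e < 0"
    then show "eventually (\<lambda>i. e < (\<Sum>k. (a k)\<^sup>2 * v i k)) sequentially"
    proof (intro always_eventually allI)
      fix i
      have "0 \<le> (\<Sum>k. (a k)\<^sup>2 * v i k)"
        by (rule suminf_nonneg[OF sav]) (simp add: v0)
      then show "e < (\<Sum>k. (a k)\<^sup>2 * v i k)" using \<open>e < 0\<close> by linarith
    qed
  next
    fix e :: real assume e: "0 < e"
    define \<delta> where "\<delta> = e / (2 * (C + 1))"
    have d0: "\<delta> > 0" using e C0 by (simp add: \<delta>_def)
    have dC: "\<delta> * C < e / 2" using e C0 by (simp add: \<delta>_def field_simps)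
    have "eventually (\<lambda>k. (a k)\<^sup>2 < \<delta>) sequentially"
      using t2 d0 by (rule order_tendstoD)
    then obtain K where K: "\<And>k. k \<ge> K \<Longrightarrow> (a k)\<^sup>2 < \<delta>" by (auto simp: eventually_sequentially)
    have head: "(\<lambda>i. \<Sum>k<K. (a k)\<^sup>2 * v i k) \<longlonglongrightarrow> (\<Sum>k<K. (a k)\<^sup>2 * 0)"
      by (intro tendsto_sum tendsto_mult tendsto_const vl)
    then have "eventually (\<lambda>i. (\<Sum>k<K. (a k)\<^sup>2 * v i k) < e / 2) sequentially"
      using e by (intro order_tendstoD(2)[OF head]) simp
    then show "eventually (\<lambda>i. (\<Sum>k. (a k)\<^sup>2 * v i k) < e) sequentially"
    proof eventually_elim
      fix i assume h: "(\<Sum>k<K. (a k)\<^sup>2 * v i k) < e / 2"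
      define w where "w = (\<lambda>k. (if k < K then (a k)\<^sup>2 * v i k else 0) + \<delta> * v i k)"
      have sw1: "summable (\<lambda>k. if k < K then (a k)\<^sup>2 * v i k else 0)"
        by (rule summable_finite[of "{..<K}"]) auto
      have sw: "summable w" unfolding w_def by (intro summable_add sw1 summable_mult vs)
      have le: "(a k)\<^sup>2 * v i k \<le> w k" for k
      proof (cases "k < K")
        case True then show ?thesis using d0 v0[of i k] by (simp add: w_def)
      next
        case False
        then have "(a k)\<^sup>2 \<le> \<delta>" using K[of k] by simp
        then show ?thesis using False v0[of i k] by (simp add: w_def mult_right_mono)
      qed
      have "(\<Sum>k. (a k)\<^sup>2 * v i k) \<le> suminf w" by (rule suminf_le[OF le sav sw])
      also have "suminf w = (\<Sum>k. if k < K then (a k)\<^sup>2 * v i k else 0) + \<delta> * suminf (v i)"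
        unfolding w_def using sw1 vs[of i] by (simp add: suminf_add[symmetric] suminf_mult)
      also have "(\<Sum>k. if k < K then (a k)\<^sup>2 * v i k else 0) = (\<Sum>k<K. (a k)\<^sup>2 * v i k)"
        by (subst suminf_finite[of "{..<K}"]) auto
      also have "\<delta> * suminf (v i) \<le> \<delta> * C" using vC[of i] d0 by (intro mult_left_mono) auto
      finally show "(\<Sum>k. (a k)\<^sup>2 * v i k) < e" using h dC by linarith
    qed
  qed
qed

context
  fixes \<mu> :: "real measure" and \<alpha> :: real
  assumes a: "\<alpha> > 0"
    and sets_mu[measurable_cong]: "sets \<mu> = sets borel"
    and A0: "Amu \<mu> 0 < \<infinity>"
    and mu01: "emeasure \<mu> {0<..<1} = 0"
begin

lemma compact_part:
  fixes fs :: "nat \<Rightarrow> complex \<Rightarrow> complex"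
  assumes lim0: "(\<lambda>n. amu \<mu> n) \<longlonglongrightarrow> 0"
    and fs: "\<And>n. fs n \<in> fock_space \<alpha>" and bd: "bounded (range (\<lambda>n. fock_norm \<alpha> (fs n)))"
  shows "\<exists>r g. strict_mono r \<and> g \<in> fock_space \<alpha> \<and> (\<lambda>k. fock_norm \<alpha> (hausdorff_op \<mu> (fs (r k)) - g)) \<longlonglongrightarrow> 0"
proof -
  define c where "c n k = tc (fs n) k" for n k
  define S where "S n = (\<Sum>k. (cmod (c n k))\<^sup>2 * gk \<alpha> k)" for n
  have c_abs: "abs_sum (c n)" for n unfolding c_def by (rule fock_coeffs(1)[OF a fs])
  have c_rep: "fs n z = (\<Sum>k. c n k * z^k)" for n z unfolding c_def by (rule fock_coeffs(2)[OF a fs])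
  have c_sum: "summable (\<lambda>k. (cmod (c n k))\<^sup>2 * gk \<alpha> k)" for n unfolding c_def by (rule fock_coeffs(3)[OF a fs])
  have c_norm: "fock_norm \<alpha> (fs n) = sqrt (\<alpha> / pi * S n)" for n
    unfolding c_def S_def by (rule fock_coeffs(4)[OF a fs])
  have S0: "S n \<ge> 0" for n unfolding S_def by (rule suminf_nonneg[OF c_sum]) (rule coef_nonneg[OF a])
  obtain B where B: "\<And>n. fock_norm \<alpha> (fs n) \<le> B"
  proof -
    from bd obtain B where "\<forall>x\<in>range (\<lambda>n. fock_norm \<alpha> (fs n)). norm x \<le> B"
      unfolding bounded_iff by blast
    then have "\<And>n. fock_norm \<alpha> (fs n) \<le> B"
      by (metis (no_types, lifting) UNIV_I abs_le_D1 image_eqI real_norm_def)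
    then show ?thesis using that by blast
  qed
  define B' where "B' = pi / \<alpha> * B\<^sup>2"
  have SB: "S n \<le> B'" for n
  proof -
    have nn: "0 \<le> \<alpha> / pi * S n" using a S0[of n] by simp
    then have "\<alpha> / pi * S n = (fock_norm \<alpha> (fs n))\<^sup>2" by (simp add: c_norm)
    also have "\<dots> \<le> B\<^sup>2" using B[of n] nn by (intro power_mono) (auto simp: c_norm)
    finally show ?thesis using a by (simp add: B'_def field_simps)
  qed
  have termB: "(cmod (c n k))\<^sup>2 * gk \<alpha> k \<le> B'" for n k
    using term_le_suminf[OF c_sum coef_nonneg[OF a], of n k] SB[of n] unfolding S_def by linarith
  have cbd: "bounded (range (\<lambda>n. c n k))" for k
  proof (rule boundedI)
    fix x assume "x \<in> range (\<lambda>n. c n k)"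
    then obtain n where x: "x = c n k" by auto
    have "(cmod (c n k))\<^sup>2 \<le> B' / gk \<alpha> k" using termB[of n k] gk_pos[OF a, of k] by (simp add: field_simps)
    then have "cmod (c n k) \<le> sqrt (B' / gk \<alpha> k)" by (intro real_le_rsqrt)
    then show "norm x \<le> sqrt (B' / gk \<alpha> k)" by (simp add: x)
  qed
  obtain r where r: "strict_mono r" and rc: "\<And>k. \<exists>l. (\<lambda>i. c (r i) k) \<longlonglongrightarrow> l"
    using diagonal_bounded[of c, OF cbd] by blast
  define d where "d k = lim (\<lambda>i. c (r i) k)" for k
  have d_lim: "(\<lambda>i. c (r i) k) \<longlonglongrightarrow> d k" for k
    unfolding d_def using rc[of k] convergent_LIMSEQ_iff convergent_def by blast
  have d_part: "(\<Sum>k<K. (cmod (d k))\<^sup>2 * gk \<alpha> k) \<le> B'" for K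
  proof (rule LIMSEQ_le_const2)
    show "(\<lambda>i. \<Sum>k<K. (cmod (c (r i) k))\<^sup>2 * gk \<alpha> k) \<longlonglongrightarrow> (\<Sum>k<K. (cmod (d k))\<^sup>2 * gk \<alpha> k)"
      by (intro tendsto_intros d_lim)
    show "\<exists>N. \<forall>i\<ge>N. (\<Sum>k<K. (cmod (c (r i) k))\<^sup>2 * gk \<alpha> k) \<le> B'"
    proof (intro exI allI impI)
      fix i
      have "(\<Sum>k<K. (cmod (c (r i) k))\<^sup>2 * gk \<alpha> k) \<le> S (r i)"
        unfolding S_def by (rule sum_le_suminf[OF c_sum]) (auto intro: coef_nonneg[OF a])
      then show "(\<Sum>k<K. (cmod (c (r i) k))\<^sup>2 * gk \<alpha> k) \<le> B'" using SB[of "r i"] by linarith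
    qed
  qed
  have d_sum: "summable (\<lambda>k. (cmod (d k))\<^sup>2 * gk \<alpha> k)"
    by (rule summableI_nonneg_bounded[OF coef_nonneg[OF a] d_part])
  have dB: "(\<Sum>k. (cmod (d k))\<^sup>2 * gk \<alpha> k) \<le> B'"
    by (rule suminf_le_const[OF d_sum d_part])
  have d_abs: "abs_sum d" by (rule abs_sum_from_L2[OF a d_sum])
  define G where "G = (\<lambda>z. \<Sum>k. (complex_of_real (amu \<mu> k) * d k) * z^k)"
  note hd = H_coeffs[OF a sets_mu A0 mu01 d_abs refl d_sum]
  have G: "G \<in> fock_space \<alpha>" unfolding G_def by (rule fock_from_coeffs(1)[OF a hd(2) hd(3)])
  define h where "h i k = complex_of_real (amu \<mu> k) * c (r i) k - complex_of_real (amu \<mu> k) * d k" for i k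
  have norm_eq: "fock_norm \<alpha> (hausdorff_op \<mu> (fs (r i)) - G) = sqrt (\<alpha> / pi * (\<Sum>k. (cmod (h i k))\<^sup>2 * gk \<alpha> k))" for i
  proof -
    note hc = H_coeffs[OF a sets_mu A0 mu01 c_abs c_rep c_sum, of "r i"]
    have eq: "hausdorff_op \<mu> (fs (r i)) - G = (\<lambda>z. \<Sum>k. h i k * z^k)"
      unfolding hc(1) G_def h_def by (rule series_diff(1)[OF hc(2) hd(2)])
    have ab: "abs_sum (h i)" unfolding h_def by (rule series_diff(2)[OF hc(2) hd(2)])
    have sm: "summable (\<lambda>k. (cmod (h i k))\<^sup>2 * gk \<alpha> k)" unfolding h_def by (rule L2_diff(1)[OF a hc(3) hd(3)])
    show ?thesis unfolding eq by (rule fock_from_coeffs(2)[OF a ab sm])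
  qed
  define v where "v i k = (cmod (c (r i) k - d k))\<^sup>2 * gk \<alpha> k" for i k
  have hv: "(cmod (h i k))\<^sup>2 * gk \<alpha> k = (amu \<mu> k)\<^sup>2 * v i k" for i k
  proof -
    have "h i k = complex_of_real (amu \<mu> k) * (c (r i) k - d k)" by (simp add: h_def algebra_simps)
    then show ?thesis by (simp add: v_def norm_mult power_mult_distrib)
  qed
  have T0: "(\<lambda>i. \<Sum>k. (amu \<mu> k)\<^sup>2 * v i k) \<longlonglongrightarrow> 0"
  proof (rule tail_lemma[OF lim0])
    show "v i k \<ge> 0" for i k unfolding v_def by (rule coef_nonneg[OF a])
    show "summable (v i)" for i unfolding v_def by (rule L2_diff(1)[OF a c_sum d_sum])
    show "suminf (v i) \<le> 4 * B'" for i
      using L2_diff(2)[OF a c_sum d_sum, of "r i"] SB[of "r i"] dB unfolding v_def S_def by linarith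
    show "(\<lambda>i. v i k) \<longlonglongrightarrow> 0" for k
    proof -
      have "(\<lambda>i. (cmod (c (r i) k - d k))\<^sup>2 * gk \<alpha> k) \<longlonglongrightarrow> (cmod (d k - d k))\<^sup>2 * gk \<alpha> k"
        by (intro tendsto_intros d_lim)
      then show ?thesis unfolding v_def by simp
    qed
  qed
  have "(\<lambda>i. fock_norm \<alpha> (hausdorff_op \<mu> (fs (r i)) - G)) \<longlonglongrightarrow> sqrt (\<alpha> / pi * 0)"
    unfolding norm_eq hv by (intro tendsto_intros T0)
  then have "(\<lambda>i. fock_norm \<alpha> (hausdorff_op \<mu> (fs (r i)) - G)) \<longlonglongrightarrow> 0" by simp
  then show ?thesis using r G by blast
qed

end

context
  fixes \<mu> :: "real measure" and \<alpha> :: real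
  assumes a: "\<alpha> > 0"
    and sets_mu[measurable_cong]: "sets \<mu> = sets borel"
    and A0: "Amu \<mu> 0 < \<infinity>"
    and mu01: "emeasure \<mu> {0<..<1} = 0"
begin

lemma amu_lower_or_lim:
  assumes "\<not> (\<lambda>n. amu \<mu> n) \<longlonglongrightarrow> 0"
  shows "\<exists>l>0. \<forall>n. amu \<mu> n \<ge> l"
proof (rule ccontr)
  assume "\<not> (\<exists>l>0. \<forall>n. amu \<mu> n \<ge> l)"
  then have small: "\<And>l. l > 0 \<Longrightarrow> \<exists>n. amu \<mu> n < l" by (auto simp: not_le)
  have "(\<lambda>n. amu \<mu> n) \<longlonglongrightarrow> 0"
  proof (rule order_tendstoI)
    fix e :: real assume "e < 0"
    then show "eventually (\<lambda>n. e < amu \<mu> n) sequentially"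
      using amu_nonneg[OF sets_mu A0] by (intro always_eventually) (auto intro: less_le_trans)
  next
    fix e :: real assume "e > 0"
    then obtain n where n: "amu \<mu> n < e" using small by blast
    show "eventually (\<lambda>m. amu \<mu> m < e) sequentially"
      unfolding eventually_sequentially
      using n amu_mono[OF sets_mu A0] by (meson le_less_trans)
  qed
  with assms show False by simp
qed

lemma noncompact_part:
  assumes comp: "compact_on_fock \<alpha> (hausdorff_op \<mu>)"
  shows "(\<lambda>n. amu \<mu> n) \<longlonglongrightarrow> 0"
proof (rule ccontr)
  assume "\<not> (\<lambda>n. amu \<mu> n) \<longlonglongrightarrow> 0"
  then obtain l where l: "l > 0" "\<And>n. amu \<mu> n \<ge> l" using amu_lower_or_lim by blast
  define p where "p n k = (if k = n then complex_of_real (1 / sqrt (gk \<alpha> n)) else 0)" for n k :: nat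
  define fs where "fs n = (\<lambda>z. \<Sum>k. p n k * z^k)" for n
  have p_abs: "abs_sum (p n)" for n
    unfolding abs_sum_def by (intro allI impI summable_finite[of "{n}"]) (auto simp: p_def)
  have p_sum: "summable (\<lambda>k. (cmod (p n k))\<^sup>2 * gk \<alpha> k)" for n
    by (rule summable_finite[of "{n}"]) (auto simp: p_def)
  have p_one: "(\<Sum>k. (cmod (p n k))\<^sup>2 * gk \<alpha> k) = 1" for n
  proof -
    have "(\<Sum>k. (cmod (p n k))\<^sup>2 * gk \<alpha> k) = (\<Sum>k\<in>{n}. (cmod (p n k))\<^sup>2 * gk \<alpha> k)"
      by (rule suminf_finite) (auto simp: p_def)
    also have "\<dots> = (1 / sqrt (gk \<alpha> n))\<^sup>2 * gk \<alpha> n"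
      using gk_pos[OF a, of n] by (simp add: p_def norm_divide)
    also have "\<dots> = 1" using gk_pos[OF a, of n] by (simp add: power_divide)
    finally show ?thesis .
  qed
  have fsF: "fs n \<in> fock_space \<alpha>" for n unfolding fs_def by (rule fock_from_coeffs(1)[OF a p_abs p_sum])
  have fsN: "fock_norm \<alpha> (fs n) = sqrt (\<alpha> / pi)" for n
    unfolding fs_def fock_from_coeffs(2)[OF a p_abs p_sum] p_one by simp
  have bd: "bounded (range (\<lambda>n. fock_norm \<alpha> (fs n)))"
    by (rule boundedI[where B="sqrt (\<alpha> / pi)"]) (use a in \<open>auto simp: fsN\<close>)
  obtain r G where r: "strict_mono r" and G: "G \<in> fock_space \<alpha>"
    and lim: "(\<lambda>k. fock_norm \<alpha> (hausdorff_op \<mu> (fs (r k)) - G)) \<longlonglongrightarrow> 0"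
    using comp fsF bd unfolding compact_on_fock_def by blast
  define d where "d = tc G"
  note gc = fock_coeffs[OF a G, folded d_def]
  have dlim: "(\<lambda>k. (cmod (d k))\<^sup>2 * gk \<alpha> k) \<longlonglongrightarrow> 0" by (rule summable_LIMSEQ_zero[OF gc(3)])
  have dlim2: "(\<lambda>k. cmod (d k) * sqrt (gk \<alpha> k)) \<longlonglongrightarrow> 0"
  proof -
    have "(\<lambda>k. sqrt ((cmod (d k))\<^sup>2 * gk \<alpha> k)) \<longlonglongrightarrow> sqrt 0" by (intro tendsto_intros dlim)
    then show ?thesis using gk_pos[OF a] by (simp add: real_sqrt_mult)
  qed
  then have "(\<lambda>i. cmod (d (r i)) * sqrt (gk \<alpha> (r i))) \<longlonglongrightarrow> 0"
    using LIMSEQ_subseq_LIMSEQ[OF _ r] by (simp add: o_def)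
  then have ev1: "eventually (\<lambda>i. cmod (d (r i)) * sqrt (gk \<alpha> (r i)) < l / 2) sequentially"
    using l by (intro order_tendstoD(2)) auto
  have ev2: "eventually (\<lambda>i. fock_norm \<alpha> (hausdorff_op \<mu> (fs (r i)) - G) < sqrt (\<alpha> / pi * (l / 2)\<^sup>2)) sequentially"
    using a l by (intro order_tendstoD(2)[OF lim]) simp
  have "eventually (\<lambda>i. False) sequentially"
    using ev1 ev2
  proof eventually_elim
    fix i
    assume e1: "cmod (d (r i)) * sqrt (gk \<alpha> (r i)) < l / 2"
      and e2: "fock_norm \<alpha> (hausdorff_op \<mu> (fs (r i)) - G) < sqrt (\<alpha> / pi * (l / 2)\<^sup>2)"
    define n where "n = r i"
    note hc = H_coeffs[OF a sets_mu A0 mu01 p_abs _ p_sum, of "fs n" n]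
    have Hd: "hausdorff_op \<mu> (fs n) - G = (\<lambda>z. \<Sum>k. (complex_of_real (amu \<mu> k) * p n k - d k) * z^k)"
    proof -
      have "G = (\<lambda>z. \<Sum>k. d k * z^k)" using gc(2) by auto
      then show ?thesis unfolding hc(1)[OF fs_def[THEN fun_cong]]
        by (simp only: series_diff(1)[OF hc(2)[OF fs_def[THEN fun_cong]] gc(1)])
    qed
    have ab: "abs_sum (\<lambda>k. complex_of_real (amu \<mu> k) * p n k - d k)"
      by (rule series_diff(2)[OF hc(2)[OF fs_def[THEN fun_cong]] gc(1)])
    have sm: "summable (\<lambda>k. (cmod (complex_of_real (amu \<mu> k) * p n k - d k))\<^sup>2 * gk \<alpha> k)"
      by (rule L2_diff(1)[OF a hc(3)[OF fs_def[THEN fun_cong]] gc(3)])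
    have nrm: "fock_norm \<alpha> (hausdorff_op \<mu> (fs n) - G)
        = sqrt (\<alpha> / pi * (\<Sum>k. (cmod (complex_of_real (amu \<mu> k) * p n k - d k))\<^sup>2 * gk \<alpha> k))"
      unfolding Hd by (rule fock_from_coeffs(2)[OF a ab sm])
    have g: "gk \<alpha> n > 0" by (rule gk_pos[OF a])
    have x0: "0 \<le> cmod (d n) * sqrt (gk \<alpha> n)" using g by simp
    have "(l / 2)\<^sup>2 \<le> (amu \<mu> n - cmod (d n) * sqrt (gk \<alpha> n))\<^sup>2"
      using e1 l(2)[of n] l(1) by (intro power_mono) (auto simp: n_def)
    also have "amu \<mu> n - cmod (d n) * sqrt (gk \<alpha> n) \<le> cmod (complex_of_real (amu \<mu> n) - d n * sqrt (gk \<alpha> n))"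
      using norm_triangle_ineq2[of "complex_of_real (amu \<mu> n)" "d n * sqrt (gk \<alpha> n)"]
        amu_nonneg[OF sets_mu A0, of n] g by (simp add: norm_mult)
    then have "(amu \<mu> n - cmod (d n) * sqrt (gk \<alpha> n))\<^sup>2 \<le> (cmod (complex_of_real (amu \<mu> n) - d n * sqrt (gk \<alpha> n)))\<^sup>2"
      using e1 l(2)[of n] l(1) x0 by (intro power_mono) (auto simp: n_def)
    also have "(cmod (complex_of_real (amu \<mu> n) - d n * sqrt (gk \<alpha> n)))\<^sup>2
        = (cmod (complex_of_real (amu \<mu> n) * p n n - d n))\<^sup>2 * gk \<alpha> n"
    proof -
      have "complex_of_real (amu \<mu> n) - d n * sqrt (gk \<alpha> n)
          = (complex_of_real (amu \<mu> n) * p n n - d n) * complex_of_real (sqrt (gk \<alpha> n))"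
      proof -
        have sne: "complex_of_real (sqrt (gk \<alpha> n)) \<noteq> 0" using g by simp
        show ?thesis using sne by (simp add: p_def field_simps)
      qed
      then show ?thesis using g by (simp add: norm_mult power_mult_distrib)
    qed
    also have "\<dots> \<le> (\<Sum>k. (cmod (complex_of_real (amu \<mu> k) * p n k - d k))\<^sup>2 * gk \<alpha> k)"
      by (rule term_le_suminf[OF sm coef_nonneg[OF a]])
    finally have "(l / 2)\<^sup>2 \<le> (\<Sum>k. (cmod (complex_of_real (amu \<mu> k) * p n k - d k))\<^sup>2 * gk \<alpha> k)" .
    then have "sqrt (\<alpha> / pi * (l / 2)\<^sup>2) \<le> fock_norm \<alpha> (hausdorff_op \<mu> (fs n) - G)"
      unfolding nrm using a by (intro real_sqrt_le_mono mult_left_mono) auto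
    then show False using e2 by (simp add: n_def)
  qed
  then show False by simp
qed

end

theorem theorem2:
  fixes \<alpha> :: real and \<mu> :: "real measure"
  assumes "\<alpha> > 0"
    and "sets \<mu> = sets borel"
    and "emeasure \<mu> {..0} = 0"
    and "emeasure \<mu> {0<..<1} = 0"
    and "(SUP n::nat. \<integral>\<^sup>+ t. ennreal (1 / t ^ (n + 1)) * indicator {1..} t \<partial>\<mu>) < \<infinity>"
  shows "compact_on_fock \<alpha> (hausdorff_op \<mu>) \<longleftrightarrow>
         (\<lambda>n::nat. \<integral>\<^sup>+ t. ennreal (1 / t ^ (n + 1)) * indicator {1..} t \<partial>\<mu>) \<longlonglongrightarrow> 0"
proof -
  have A0: "Amu \<mu> 0 < \<infinity>"
  proof -
    have "Amu \<mu> 0 \<le> (SUP n::nat. Amu \<mu> n)" by (rule SUP_upper) simp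
    then show ?thesis using assms(5) unfolding Amu_def by simp
  qed
  have eqA: "(\<lambda>n::nat. \<integral>\<^sup>+ t. ennreal (1 / t ^ (n + 1)) * indicator {1..} t \<partial>\<mu>) = (\<lambda>n. ennreal (amu \<mu> n))"
    using ennreal_amu[OF assms(2) A0] unfolding Amu_def by simp
  have tA: "((\<lambda>n. ennreal (amu \<mu> n)) \<longlonglongrightarrow> 0) \<longleftrightarrow> ((\<lambda>n. amu \<mu> n) \<longlonglongrightarrow> 0)"
    by (rule ennreal_tendsto_0_iff) (rule amu_nonneg[OF assms(2) A0])
  show ?thesis
    unfolding eqA tA
  proof
    assume "compact_on_fock \<alpha> (hausdorff_op \<mu>)"
    then show "(\<lambda>n. amu \<mu> n) \<longlonglongrightarrow> 0" by (rule noncompact_part[OF assms(1,2) A0 assms(4)])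
  next
    assume lim: "(\<lambda>n. amu \<mu> n) \<longlonglongrightarrow> 0"
    show "compact_on_fock \<alpha> (hausdorff_op \<mu>)"
      unfolding compact_on_fock_def
    proof (intro conjI ballI allI impI)
      fix f assume "f \<in> fock_space \<alpha>"
      then show "hausdorff_op \<mu> f \<in> fock_space \<alpha>" by (rule H_maps[OF assms(1,2) A0 assms(4)])
    next
      fix fs :: "nat \<Rightarrow> complex \<Rightarrow> complex"
      assume "(\<forall>n. fs n \<in> fock_space \<alpha>) \<and> bounded (range (\<lambda>n. fock_norm \<alpha> (fs n)))"
      then show "\<exists>r g. strict_mono r \<and> g \<in> fock_space \<alpha> \<and> (\<lambda>k. fock_norm \<alpha> (hausdorff_op \<mu> (fs (r k)) - g)) \<longlonglongrightarrow> 0"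
        using compact_part[OF assms(1,2) A0 assms(4) lim] by blast
    qed
  qed
qed

end
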